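(* Let $G$ be a triangle-free graph on $n$ vertices that contains a leaf. Then $\phi(G)<0.93\cdot 6^{n/4}$.
   Context: Graphs are finite and simple; a leaf is a vertex of degree $1$. A subset $F$ of vertices is a dissociation set if $G[F]$ has maximum degree at most $1$; a maximal dissociation set is one not properly contained in another dissociation set; $\phi(G)$ is the number of maximal dissociation sets of $G$. *)

theory Defs
  imports Complex_Main
begin

definition simple_graph :: "'a set \<Rightarrow> ('a \<Rightarrow> 'a \<Rightarrow> bool) \<Rightarrow> bool" where
  "simple_graph V E \<longleftrightarrow> finite V \<and> (\<forall>u v. E u v \<longrightarrow> u \<in> V \<and> v \<in> V)
     \<and> (\<forall>u v. E u v \<longrightarrow> E v u) \<and> (\<forall>v. \<not> E v v)"

definition neighbors :: "'a set \<Rightarrow> ('a \<Rightarrow> 'a \<Rightarrow> bool) \<Rightarrow> 'a \<Rightarrow> 'a set" where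
  "neighbors V E v = {u \<in> V. E v u}"

definition degree :: "'a set \<Rightarrow> ('a \<Rightarrow> 'a \<Rightarrow> bool) \<Rightarrow> 'a \<Rightarrow> nat" where
  "degree V E v = card (neighbors V E v)"

definition triangle_free :: "'a set \<Rightarrow> ('a \<Rightarrow> 'a \<Rightarrow> bool) \<Rightarrow> bool" where
  "triangle_free V E \<longleftrightarrow> \<not> (\<exists>a\<in>V. \<exists>b\<in>V. \<exists>c\<in>V. E a b \<and> E b c \<and> E a c)"

definition has_leaf :: "'a set \<Rightarrow> ('a \<Rightarrow> 'a \<Rightarrow> bool) \<Rightarrow> bool" where
  "has_leaf V E \<longleftrightarrow> (\<exists>v\<in>V. degree V E v = 1)"

definition dissociation_set :: "'a set \<Rightarrow> ('a \<Rightarrow> 'a \<Rightarrow> bool) \<Rightarrow> 'a set \<Rightarrow> bool" where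
  "dissociation_set V E F \<longleftrightarrow> F \<subseteq> V \<and> (\<forall>v\<in>F. degree F E v \<le> 1)"

definition maximal_dissociation_set :: "'a set \<Rightarrow> ('a \<Rightarrow> 'a \<Rightarrow> bool) \<Rightarrow> 'a set \<Rightarrow> bool" where
  "maximal_dissociation_set V E F \<longleftrightarrow> dissociation_set V E F
     \<and> \<not> (\<exists>F'. dissociation_set V E F' \<and> F \<subset> F')"

definition phi :: "'a set \<Rightarrow> ('a \<Rightarrow> 'a \<Rightarrow> bool) \<Rightarrow> nat" where
  "phi V E = card {F. maximal_dissociation_set V E F}"

end

theory Submission
  imports Defs
begin


locale sg =
  fixes E :: "'a \<Rightarrow> 'a \<Rightarrow> bool"
  assumes symE: "E u v \<Longrightarrow> E v u" and irrE: "\<not> E v v"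
begin

definition MD :: "'a set \<Rightarrow> 'a set set" where
  "MD V = {F. maximal_dissociation_set V E F}"

lemma phi_MD: "phi V E = card (MD V)"
  by (simp add: phi_def MD_def)

lemma finite_MD: "finite V \<Longrightarrow> finite (MD V)"
  by (rule finite_subset[of _ "Pow V"])
     (auto simp: MD_def maximal_dissociation_set_def dissociation_set_def)

lemma diss_subset:
  assumes "finite F" "dissociation_set V E F" "F' \<subseteq> F"
  shows "dissociation_set V E F'"
proof -
  have "degree F' E v \<le> degree F E v" for v
    unfolding degree_def neighbors_def
    by (rule card_mono) (use assms in auto)
  then show ?thesis using assms unfolding dissociation_set_def
    by (meson dual_order.trans subset_iff)
qed

definition NX :: "'a set \<Rightarrow> 'a set \<Rightarrow> 'a set" where
  "NX V X = {y\<in>V. \<exists>x\<in>X. E x y}"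

lemma pattern:
  assumes fin: "finite V" and M: "maximal_dissociation_set V E F" and XF: "X \<subseteq> F"
    and noe: "\<forall>x\<in>X. \<forall>y\<in>F-X. \<not> E x y" and YF: "Y \<inter> F = {}"
  shows "maximal_dissociation_set (V - (X \<union> NX V X \<union> Y)) E (F - X)"
proof -
  let ?V' = "V - (X \<union> NX V X \<union> Y)"
  have D: "dissociation_set V E F" and FV: "F \<subseteq> V" and mx: "\<not> (\<exists>F'. dissociation_set V E F' \<and> F \<subset> F')"
    using M by (auto simp: maximal_dissociation_set_def dissociation_set_def)
  have finF: "finite F" using fin FV finite_subset by blast
  have sub: "F - X \<subseteq> ?V'"
    using FV noe YF by (auto simp: NX_def dest: symE)
  have D1: "dissociation_set ?V' E (F - X)"
  proof -
    have "dissociation_set V E (F - X)" by (rule diss_subset[OF finF D]) auto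
    then show ?thesis using sub by (auto simp: dissociation_set_def)
  qed
  have "\<not> (\<exists>F'. dissociation_set ?V' E F' \<and> F - X \<subset> F')"
  proof
    assume "\<exists>F'. dissociation_set ?V' E F' \<and> F - X \<subset> F'"
    then obtain F' where D': "dissociation_set ?V' E F'" and lt: "F - X \<subset> F'" by blast
    have F'V: "F' \<subseteq> ?V'" using D' by (simp add: dissociation_set_def)
    let ?G = "F' \<union> X"
    have "dissociation_set V E ?G"
      unfolding dissociation_set_def
    proof (intro conjI ballI)
      show "?G \<subseteq> V" using F'V XF FV by auto
      fix w assume w: "w \<in> ?G"
      show "degree ?G E w \<le> 1"
      proof (cases "w \<in> X")
        case True
        have "neighbors ?G E w \<subseteq> neighbors F E w"
        proof
          fix u assume "u \<in> neighbors ?G E w"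
          then have u: "u \<in> F' \<or> u \<in> X" "E w u" by (auto simp: neighbors_def)
          have "u \<notin> F'"
          proof
            assume "u \<in> F'"
            then have "u \<in> V" "u \<notin> NX V X" using F'V by auto
            then show False using True u(2) by (auto simp: NX_def)
          qed
          then show "u \<in> neighbors F E w" using u XF by (auto simp: neighbors_def)
        qed
        then have "degree ?G E w \<le> degree F E w"
          unfolding degree_def by (rule card_mono[rotated]) (auto simp: neighbors_def finF)
        also have "\<dots> \<le> 1" using D True XF by (auto simp: dissociation_set_def)
        finally show ?thesis .
      next
        case False
        then have wF': "w \<in> F'" using w by auto
        have "neighbors ?G E w = neighbors F' E w"
        proof -
          have "\<not> E w u" if "u \<in> X" for u
          proof
            assume "E w u"
            then have "E u w" by (rule symE)
            moreover have "w \<in> V" "w \<notin> NX V X" using wF' F'V by auto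
            ultimately show False using that by (auto simp: NX_def)
          qed
          then show ?thesis by (auto simp: neighbors_def)
        qed
        then show ?thesis using D' wF' by (simp add: dissociation_set_def degree_def)
      qed
    qed
    moreover have "F \<subset> ?G"
    proof -
      obtain y where y: "y \<in> F'" "y \<notin> F - X" using lt by blast
      have "y \<notin> X" using y F'V by auto
      then have "y \<notin> F" using y by auto
      then show ?thesis using lt y by auto
    qed
    ultimately show False using mx by blast
  qed
  then show ?thesis using D1 by (simp add: maximal_dissociation_set_def)
qed

lemma branch:
  assumes fin: "finite V" and AM: "A \<subseteq> MD V"
    and P: "\<And>F. F \<in> A \<Longrightarrow> X \<subseteq> F \<and> (\<forall>x\<in>X. \<forall>y\<in>F-X. \<not> E x y) \<and> Y \<inter> F = {}"
  shows "card A \<le> card (MD (V - (X \<union> NX V X \<union> Y)))"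
proof (rule card_inj_on_le[where f="\<lambda>F. F - X"])
  show "inj_on (\<lambda>F. F - X) A"
  proof (rule inj_onI)
    fix F G assume "F \<in> A" "G \<in> A" "F - X = G - X"
    then show "F = G" using P[of F] P[of G] by blast
  qed
  show "(\<lambda>F. F - X) ` A \<subseteq> MD (V - (X \<union> NX V X \<union> Y))"
  proof
    fix H assume "H \<in> (\<lambda>F. F - X) ` A"
    then obtain F where F: "F \<in> A" "H = F - X" by blast
    then show "H \<in> MD (V - (X \<union> NX V X \<union> Y))"
      using pattern[OF fin, of F X Y] P[OF F(1)] AM by (auto simp: MD_def)
  qed
  show "finite (MD (V - (X \<union> NX V X \<union> Y)))" using fin by (intro finite_MD) auto
qed

lemma NX_empty[simp]: "NX V {} = {}" by (simp add: NX_def)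

lemma NX_single: "{v} \<union> NX V {v} = insert v (neighbors V E v)"
  by (auto simp: NX_def neighbors_def)

lemma NX_single'[simp]: "NX V {v} = neighbors V E v"
  by (auto simp: NX_def neighbors_def)

lemma NX_pair'[simp]: "NX V {u, v} = neighbors V E u \<union> neighbors V E v"
  by (auto simp: NX_def neighbors_def)

lemma NX_pair: "{u, v} \<union> NX V {u, v} = insert v (neighbors V E v) \<union> insert u (neighbors V E u)"
  by (auto simp: NX_def neighbors_def)

lemma MD_D: "F \<in> MD V \<Longrightarrow> dissociation_set V E F"
  by (simp add: MD_def maximal_dissociation_set_def)

lemma MD_sub: "F \<in> MD V \<Longrightarrow> F \<subseteq> V"
  by (simp add: MD_def maximal_dissociation_set_def dissociation_set_def)

lemma unique_nb:
  assumes "finite V" "dissociation_set V E F" "v \<in> F" "u \<in> F" "y \<in> F" "E v u" "E v y"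
  shows "y = u"
proof (rule ccontr)
  assume "y \<noteq> u"
  have fF: "finite F" using assms(1,2) by (auto simp: dissociation_set_def intro: finite_subset)
  have "{u, y} \<subseteq> neighbors F E v" using assms by (auto simp: neighbors_def)
  then have "card {u, y} \<le> degree F E v" unfolding degree_def
    by (rule card_mono[rotated]) (auto simp: neighbors_def fF)
  moreover have "degree F E v \<le> 1" using assms(2,3) by (simp add: dissociation_set_def)
  ultimately show False using \<open>y \<noteq> u\<close> by simp
qed

lemma rule_T3:
  assumes fin: "finite V" and vV: "v \<in> V"
  shows "card (MD V) \<le> card (MD (V - {v})) + card (MD (V - insert v (neighbors V E v)))
     + (\<Sum>u\<in>neighbors V E v. card (MD (V - (insert v (neighbors V E v) \<union> insert u (neighbors V E u)))))"
proof -
  let ?A = "{F\<in>MD V. v \<notin> F}"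
  let ?B = "{F\<in>MD V. v \<in> F \<and> neighbors V E v \<inter> F = {}}"
  let ?C = "\<lambda>u. {F\<in>MD V. v \<in> F \<and> u \<in> F}"
  have cover: "MD V \<subseteq> ?A \<union> ?B \<union> (\<Union>u\<in>neighbors V E v. ?C u)" by blast
  have fA: "finite ?A" "finite ?B" "\<And>u. finite (?C u)" using finite_MD[OF fin] by auto
  have cA: "card ?A \<le> card (MD (V - {v}))"
    using branch[OF fin, of ?A "{}" "{v}"] by auto
  have cB: "card ?B \<le> card (MD (V - insert v (neighbors V E v)))"
  proof -
    have "card ?B \<le> card (MD (V - ({v} \<union> NX V {v} \<union> {})))"
    proof (rule branch[OF fin])
      fix F assume F: "F \<in> ?B"
      show "{v} \<subseteq> F \<and> (\<forall>x\<in>{v}. \<forall>y\<in>F - {v}. \<not> E x y) \<and> {} \<inter> F = {}"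
        using F MD_sub[of F V] by (auto simp: neighbors_def)
    qed auto
    then show ?thesis by (simp only: Un_empty_right NX_single)
  qed
  have cC: "card (?C u) \<le> card (MD (V - (insert v (neighbors V E v) \<union> insert u (neighbors V E u))))"
    if u: "u \<in> neighbors V E v" for u
  proof -
    have "card (?C u) \<le> card (MD (V - ({u,v} \<union> NX V {u,v} \<union> {})))"
    proof (rule branch[OF fin])
      fix F assume F: "F \<in> ?C u"
      have D: "dissociation_set V E F" using F MD_D by blast
      have Evu: "E v u" using u by (simp add: neighbors_def)
      have "\<not> E x y" if "x \<in> {u,v}" "y \<in> F - {u,v}" for x y
      proof
        assume Exy: "E x y"
        show False
        proof (cases "x = v")
          case True
          then show False using unique_nb[OF fin D, of v u y] F Evu Exy that by auto
        next
          case False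
          then have "x = u" using that by auto
          then show False using unique_nb[OF fin D, of u v y] F symE[OF Evu] Exy that by auto
        qed
      qed
      then show "{u, v} \<subseteq> F \<and> (\<forall>x\<in>{u, v}. \<forall>y\<in>F - {u, v}. \<not> E x y) \<and> {} \<inter> F = {}"
        using F by auto
    qed auto
    then show ?thesis by (simp only: Un_empty_right NX_pair)
  qed
  have "card (MD V) \<le> card (?A \<union> ?B \<union> (\<Union>u\<in>neighbors V E v. ?C u))"
    by (rule card_mono[OF _ cover]) (use finite_MD[OF fin] in \<open>auto intro: finite_subset\<close>)
  also have "\<dots> \<le> card ?A + card ?B + card (\<Union>u\<in>neighbors V E v. ?C u)"
    by (meson add_mono card_Un_le dual_order.trans le_refl)
  also have "card (\<Union>u\<in>neighbors V E v. ?C u) \<le> (\<Sum>u\<in>neighbors V E v. card (?C u))"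
    by (rule card_UN_le) (simp add: neighbors_def fin)
  also have "\<dots> \<le> (\<Sum>u\<in>neighbors V E v. card (MD (V - (insert v (neighbors V E v) \<union> insert u (neighbors V E u)))))"
    by (rule sum_mono) (rule cC)
  finally show ?thesis using cA cB by linarith
qed


lemma card_sub1: "A \<subseteq> {u} \<Longrightarrow> card A \<le> 1"
  using card_mono[of "{u}" A] by simp

lemma insert_diss:
  assumes fin: "finite V" and D: "dissociation_set V E F" and wV: "w \<in> V" and wF: "w \<notin> F"
    and c1: "card (neighbors F E w) \<le> 1"
    and c2: "\<And>y. y \<in> F \<Longrightarrow> E w y \<Longrightarrow> neighbors F E y = {}"
  shows "dissociation_set V E (insert w F)"
  unfolding dissociation_set_def
proof (intro conjI ballI)
  show "insert w F \<subseteq> V" using D wV by (auto simp: dissociation_set_def)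
  have fF: "finite F" using D fin by (auto simp: dissociation_set_def intro: finite_subset)
  fix y assume y: "y \<in> insert w F"
  show "degree (insert w F) E y \<le> 1"
  proof (cases "y = w")
    case True
    then have "neighbors (insert w F) E y = neighbors F E w" using irrE by (auto simp: neighbors_def)
    then show ?thesis using c1 by (simp add: degree_def)
  next
    case False
    then have yF: "y \<in> F" using y by auto
    show ?thesis
    proof (cases "E y w")
      case True
      then have "neighbors F E y = {}" using c2[OF yF] symE by blast
      then have "neighbors (insert w F) E y = {w}" using True by (auto simp: neighbors_def)
      then show ?thesis by (simp add: degree_def)
    next
      case False
      then have "neighbors (insert w F) E y = neighbors F E y" by (auto simp: neighbors_def)
      then show ?thesis using D yF by (simp add: dissociation_set_def degree_def)
    qed
  qed
qed

lemma MD_insert_False: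
  assumes "finite V" "F \<in> MD V" "w \<in> V" "w \<notin> F"
    and "card (neighbors F E w) \<le> 1"
    and "\<And>y. y \<in> F \<Longrightarrow> E w y \<Longrightarrow> neighbors F E y = {}"
  shows False
proof -
  have "dissociation_set V E (insert w F)"
    using insert_diss[OF assms(1) MD_D[OF assms(2)] assms(3,4,5,6)] .
  moreover have "F \<subset> insert w F" using assms(4) by auto
  ultimately show False using assms(2) by (auto simp: MD_def maximal_dissociation_set_def)
qed

lemma rule_iso:
  assumes fin: "finite V" and vV: "v \<in> V" and iso: "neighbors V E v = {}"
  shows "card (MD V) \<le> card (MD (V - {v}))"
proof -
  have "card (MD V) \<le> card (MD (V - ({v} \<union> NX V {v} \<union> {})))"
  proof (rule branch[OF fin])
    fix F assume F: "F \<in> MD V"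
    have FV: "F \<subseteq> V" using MD_sub[OF F] .
    have nF: "neighbors F E v = {}" using iso FV by (auto simp: neighbors_def)
    have "v \<in> F"
    proof (rule ccontr)
      assume "v \<notin> F"
      show False
      proof (rule MD_insert_False[OF fin F vV \<open>v \<notin> F\<close>])
        show "card (neighbors F E v) \<le> 1" using nF by simp
      next
        fix y assume "y \<in> F" "E v y"
        then show "neighbors F E y = {}" using iso FV by (auto simp: neighbors_def)
      qed
    qed
    then show "{v} \<subseteq> F \<and> (\<forall>x\<in>{v}. \<forall>y\<in>F - {v}. \<not> E x y) \<and> {} \<inter> F = {}"
      using nF by (auto simp: neighbors_def)
  qed auto
  also have "V - ({v} \<union> NX V {v} \<union> {}) = V - {v}" using iso by simp
  finally show ?thesis .
qed

lemma nb_single: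
  assumes "neighbors V E v = {u}"
  shows "u \<in> V" "E v u" "\<And>y. y \<in> V \<Longrightarrow> E v y \<Longrightarrow> y = u"
  using assms by (auto simp: neighbors_def set_eq_iff)

lemma rule_K2:
  assumes fin: "finite V" and vV: "v \<in> V" and uV: "u \<in> V"
    and Nv: "neighbors V E v = {u}" and Nu: "neighbors V E u = {v}"
  shows "card (MD V) \<le> card (MD (V - {u, v}))"
proof -
  note v1 = nb_single[OF Nv] and u1 = nb_single[OF Nu]
  have "card (MD V) \<le> card (MD (V - ({u,v} \<union> NX V {u,v} \<union> {})))"
  proof (rule branch[OF fin])
    fix F assume F: "F \<in> MD V"
    have FV: "F \<subseteq> V" using MD_sub[OF F] .
    have nFv: "neighbors F E v \<subseteq> {u}" using v1(3) FV by (auto simp: neighbors_def)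
    have nFu: "neighbors F E u \<subseteq> {v}" using u1(3) FV by (auto simp: neighbors_def)
    have cv: "card (neighbors F E v) \<le> 1" using nFv by (rule card_sub1)
    have cu: "card (neighbors F E u) \<le> 1" using nFu by (rule card_sub1)
    have "v \<in> F"
    proof (rule ccontr)
      assume vF: "v \<notin> F"
      show False
      proof (rule MD_insert_False[OF fin F vV vF cv])
        fix y assume "y \<in> F" "E v y"
        then have "y = u" using v1(3) FV by auto
        then show "neighbors F E y = {}" using nFu vF unfolding neighbors_def by blast
      qed
    qed
    moreover have "u \<in> F"
    proof (rule ccontr)
      assume uF: "u \<notin> F"
      show False
      proof (rule MD_insert_False[OF fin F uV uF cu])
        fix y assume "y \<in> F" "E u y"
        then have "y = v" using u1(3) FV by auto
        then show "neighbors F E y = {}" using nFv uF unfolding neighbors_def by blast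
      qed
    qed
    moreover have "\<not> E x y" if "x \<in> {u,v}" "y \<in> F - {u,v}" for x y
    proof
      assume "E x y"
      then show False using that v1(3) u1(3) FV by auto
    qed
    ultimately show "{u, v} \<subseteq> F \<and> (\<forall>x\<in>{u, v}. \<forall>y\<in>F - {u, v}. \<not> E x y) \<and> {} \<inter> F = {}"
      by auto
  qed auto
  also have "V - ({u,v} \<union> NX V {u,v} \<union> {}) = V - {u, v}"
    using Nu Nv by simp
  finally show ?thesis .
qed

lemma rule_leaf:
  assumes fin: "finite V" and vV: "v \<in> V" and uV: "u \<in> V"
    and Nv: "neighbors V E v = {u}"
  shows "card (MD V) \<le> card (MD (V - insert u (neighbors V E u))) + card (MD (V - {u, v}))
     + (\<Sum>w\<in>neighbors V E u - {v}. card (MD (V - (insert w (neighbors V E w) \<union> insert u (neighbors V E u)))))"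
proof -
  note v1 = nb_single[OF Nv]
  have Evu: "E v u" using v1(2) .
  have vNu: "v \<in> neighbors V E u" using symE[OF Evu] vV by (simp add: neighbors_def)
  let ?A = "{F\<in>MD V. v \<in> F \<and> u \<in> F}"
  let ?B = "{F\<in>MD V. v \<in> F \<and> u \<notin> F}"
  let ?C = "\<lambda>w. {F\<in>MD V. w \<in> F \<and> u \<in> F}"
  have cover: "MD V \<subseteq> ?A \<union> ?B \<union> (\<Union>w\<in>neighbors V E u - {v}. ?C w)"
  proof
    fix F assume F: "F \<in> MD V"
    have FV: "F \<subseteq> V" using MD_sub[OF F] .
    show "F \<in> ?A \<union> ?B \<union> (\<Union>w\<in>neighbors V E u - {v}. ?C w)"
    proof (cases "v \<in> F")
      case True then show ?thesis using F by auto
    next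
      case vF: False
      have nFv: "neighbors F E v \<subseteq> {u}" using v1(3) FV by (auto simp: neighbors_def)
      have cv: "card (neighbors F E v) \<le> 1" using nFv by (rule card_sub1)
      have "\<exists>w. w \<in> F \<and> E u w"
      proof (rule ccontr)
        assume nw: "\<not> (\<exists>w. w \<in> F \<and> E u w)"
        show False
        proof (rule MD_insert_False[OF fin F vV vF cv])
          fix y assume "y \<in> F" "E v y"
          then have "y = u" using v1(3) FV by auto
          then show "neighbors F E y = {}" using nw unfolding neighbors_def by blast
        qed
      qed
      then obtain w where w: "w \<in> F" "E u w" by blast
      then have uF: "u \<in> F"
      proof -
        show "u \<in> F"
        proof (rule ccontr)
          assume "u \<notin> F"
          then have "neighbors F E v = {}" using nFv unfolding neighbors_def by blast
          show False
          proof (rule MD_insert_False[OF fin F vV vF])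
            show "card (neighbors F E v) \<le> 1" using \<open>neighbors F E v = {}\<close> by simp
          next
            fix y assume "y \<in> F" "E v y"
            then show "neighbors F E y = {}" using \<open>neighbors F E v = {}\<close> by (auto simp: neighbors_def)
          qed
        qed
      qed
      have "w \<in> neighbors V E u - {v}" using w FV vF by (auto simp: neighbors_def)
      then show ?thesis using F w uF by blast
    qed
  qed
  have cA: "card ?A \<le> card (MD (V - insert u (neighbors V E u)))"
  proof -
    have "card ?A \<le> card (MD (V - ({u,v} \<union> NX V {u,v} \<union> {})))"
    proof (rule branch[OF fin])
      fix F assume F: "F \<in> ?A"
      have D: "dissociation_set V E F" using F MD_D by blast
      have "\<not> E x y" if "x \<in> {u,v}" "y \<in> F - {u,v}" for x y
      proof
        assume Exy: "E x y"
        show False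
        proof (cases "x = v")
          case True
          then show False using unique_nb[OF fin D, of v u y] F Evu Exy that by auto
        next
          case False
          then have "x = u" using that by auto
          then show False using unique_nb[OF fin D, of u v y] F symE[OF Evu] Exy that by auto
        qed
      qed
      then show "{u, v} \<subseteq> F \<and> (\<forall>x\<in>{u, v}. \<forall>y\<in>F - {u, v}. \<not> E x y) \<and> {} \<inter> F = {}"
        using F by auto
    qed auto
    also have "V - ({u,v} \<union> NX V {u,v} \<union> {}) = V - insert u (neighbors V E u)"
      using vNu Nv by auto
    finally show ?thesis .
  qed
  have cB: "card ?B \<le> card (MD (V - {u, v}))"
  proof -
    have "card ?B \<le> card (MD (V - ({v} \<union> NX V {v} \<union> {})))"
    proof (rule branch[OF fin])
      fix F assume F: "F \<in> ?B"
      have FV: "F \<subseteq> V" using F MD_sub by blast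
      show "{v} \<subseteq> F \<and> (\<forall>x\<in>{v}. \<forall>y\<in>F - {v}. \<not> E x y) \<and> {} \<inter> F = {}"
        using F FV v1(3) by auto
    qed auto
    also have "V - ({v} \<union> NX V {v} \<union> {}) = V - {u, v}"
      using Nv by auto
    finally show ?thesis .
  qed
  have cC: "card (?C w) \<le> card (MD (V - (insert w (neighbors V E w) \<union> insert u (neighbors V E u))))"
    if w: "w \<in> neighbors V E u - {v}" for w
  proof -
    have "card (?C w) \<le> card (MD (V - ({u,w} \<union> NX V {u,w} \<union> {})))"
    proof (rule branch[OF fin])
      fix F assume F: "F \<in> ?C w"
      have D: "dissociation_set V E F" using F MD_D by blast
      have "E u w" using w by (simp add: neighbors_def)
      then have Ewu: "E w u" by (rule symE)
      have "\<not> E x y" if "x \<in> {u,w}" "y \<in> F - {u,w}" for x y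
      proof
        assume Exy: "E x y"
        show False
        proof (cases "x = w")
          case True
          then show False using unique_nb[OF fin D, of w u y] F Ewu Exy that by auto
        next
          case False
          then have "x = u" using that by auto
          then show False using unique_nb[OF fin D, of u w y] F symE[OF Ewu] Exy that by auto
        qed
      qed
      then show "{u, w} \<subseteq> F \<and> (\<forall>x\<in>{u, w}. \<forall>y\<in>F - {u, w}. \<not> E x y) \<and> {} \<inter> F = {}"
        using F by auto
    qed auto
    then show ?thesis by (simp only: Un_empty_right NX_pair)
  qed
  have "card (MD V) \<le> card (?A \<union> ?B \<union> (\<Union>w\<in>neighbors V E u - {v}. ?C w))"
    by (rule card_mono[OF _ cover]) (use finite_MD[OF fin] in \<open>auto intro: finite_subset\<close>)
  also have "\<dots> \<le> card ?A + card ?B + card (\<Union>w\<in>neighbors V E u - {v}. ?C w)"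
    by (meson add_mono card_Un_le dual_order.trans le_refl)
  also have "card (\<Union>w\<in>neighbors V E u - {v}. ?C w) \<le> (\<Sum>w\<in>neighbors V E u - {v}. card (?C w))"
    by (rule card_UN_le) (simp add: neighbors_def fin)
  also have "\<dots> \<le> (\<Sum>w\<in>neighbors V E u - {v}. card (MD (V - (insert w (neighbors V E w) \<union> insert u (neighbors V E u)))))"
    by (rule sum_mono) (rule cC)
  finally show ?thesis using cA cB by linarith
qed


end



context sg begin
lemma degree_mono: "finite V \<Longrightarrow> W \<subseteq> V \<Longrightarrow> degree W E t \<le> degree V E t"
  unfolding degree_def neighbors_def by (rule card_mono) auto

end

definition xx :: real where "xx = 6 powr (1/4)"
definition ss :: real where "ss = sqrt (3 / xx)"
definition om :: "nat \<Rightarrow> real" where "om d = (if d = 0 then 1 else if d = 1 then ss else xx)"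

lemma xx_pos: "xx > 0" by (simp add: xx_def)

lemma xx4: "xx ^ 4 = 6"
proof -
  have "xx ^ 4 = xx powr (real 4)" using xx_pos by (simp add: powr_realpow)
  also have "\<dots> = 6 powr (1/4 * real 4)" unfolding xx_def by (simp add: powr_powr)
  also have "\<dots> = 6" by simp
  finally show ?thesis .
qed

lemma ss_pos: "ss > 0" using xx_pos by (simp add: ss_def)

lemma ss2: "ss ^ 2 * xx = 3"
  using xx_pos by (simp add: ss_def)

lemma xx_lo: "xx \<ge> 1.56508"
proof (rule ccontr)
  assume "\<not> ?thesis"
  then have "xx ^ 4 < 1.56508 ^ 4" using xx_pos by (intro power_strict_mono) auto
  moreover have "(1.56508::real) ^ 4 < 6" by (simp add: eval_nat_numeral)
  ultimately show False using xx4 by linarith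
qed

lemma xx_hi: "xx \<le> 1.56509"
proof (rule ccontr)
  assume "\<not> ?thesis"
  then have "1.56509 ^ 4 < xx ^ 4" by (intro power_strict_mono) auto
  moreover have "(1.56509::real) ^ 4 > 6" by (simp add: eval_nat_numeral)
  ultimately show False using xx4 by linarith
qed

lemma ss_lo: "ss \<ge> 1.38449"
proof (rule ccontr)
  assume "\<not> ?thesis"
  then have "ss ^ 2 < 1.38449 ^ 2" using ss_pos by (intro power_strict_mono) auto
  then have "ss ^ 2 * 1.56509 < 1.38449 ^ 2 * 1.56509" by simp
  moreover have "ss ^ 2 * xx \<le> ss ^ 2 * 1.56509" using xx_hi by (intro mult_left_mono) auto
  moreover have "(1.38449::real) ^ 2 * 1.56509 < 3" by (simp add: eval_nat_numeral)
  ultimately show False using ss2 by linarith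
qed

lemma ss_hi: "ss \<le> 1.38450"
proof (rule ccontr)
  assume "\<not> ?thesis"
  then have "1.38450 ^ 2 < ss ^ 2" by (intro power_strict_mono) auto
  then have "1.38450 ^ 2 * 1.56508 < ss ^ 2 * 1.56508" by simp
  moreover have "ss ^ 2 * 1.56508 \<le> ss ^ 2 * xx" using xx_lo by (intro mult_left_mono) auto
  moreover have "(1.38450::real) ^ 2 * 1.56508 > 3" by (simp add: eval_nat_numeral)
  ultimately show False using ss2 by linarith
qed

lemma om_pos: "om d > 0" using xx_pos ss_pos by (simp add: om_def)

lemma om_mono: "d \<le> d' \<Longrightarrow> om d \<le> om d'"
  using ss_lo xx_lo ss_hi by (auto simp: om_def)

context sg begin

definition Bnd :: "'a set \<Rightarrow> real" where
  "Bnd V = (\<Prod>v\<in>V. om (degree V E v))"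

lemma Bnd_pos: "Bnd V > 0"
  unfolding Bnd_def by (rule prod_pos) (simp add: om_pos)

lemma Bnd_sub:
  assumes fin: "finite V" and SV: "S \<subseteq> V" and TS: "T \<subseteq> V - S"
  shows "Bnd (V - S) * (\<Prod>s\<in>S. om (degree V E s)) * (\<Prod>t\<in>T. om (degree V E t))
         \<le> Bnd V * (\<Prod>t\<in>T. om (degree (V - S) E t))"
proof -
  let ?f = "\<lambda>t. om (degree V E t)" and ?g = "\<lambda>t. om (degree (V - S) E t)"
  have f1: "finite (V - S)" "finite T" "finite S" using fin SV TS by (auto intro: finite_subset)
  have e1: "Bnd (V - S) = prod ?g (V - S - T) * prod ?g T"
    unfolding Bnd_def using prod.subset_diff[OF TS f1(1)] by simp
  have l1: "prod ?g (V - S - T) \<le> prod ?f (V - S - T)"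
    by (rule prod_mono) (auto intro!: om_mono degree_mono fin less_imp_le[OF om_pos])
  have gT: "prod ?g T \<ge> 0" by (rule prod_nonneg) (simp add: less_imp_le om_pos)
  have a: "Bnd (V - S) \<le> prod ?f (V - S - T) * prod ?g T"
    unfolding e1 by (rule mult_right_mono[OF l1 gT])
  have b: "Bnd V = prod ?f (V - S - T) * prod ?f T * prod ?f S"
    unfolding Bnd_def using prod.subset_diff[OF SV fin, of ?f] prod.subset_diff[OF TS f1(1), of ?f]
    by (simp add: mult.assoc)
  have pS: "prod ?f S \<ge> 0" "prod ?f T \<ge> 0" by (simp_all add: prod_nonneg less_imp_le om_pos)
  have "Bnd (V - S) * prod ?f S * prod ?f T \<le> (prod ?f (V - S - T) * prod ?g T) * prod ?f S * prod ?f T"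
    by (intro mult_right_mono a pS)
  also have "\<dots> = Bnd V * prod ?g T" unfolding b by (simp add: algebra_simps)
  finally show ?thesis .
qed

end



lemma xx5: "xx ^ 5 = 6 * xx" using xx4 by (simp add: power_Suc[symmetric] eval_nat_numeral algebra_simps)
lemma xx6: "xx ^ 6 = 6 * xx ^ 2" using xx4 by (simp add: eval_nat_numeral algebra_simps)
lemma xx7: "xx ^ 7 = 6 * xx ^ 3" using xx4 by (simp add: eval_nat_numeral algebra_simps)

lemma xx2_lo: "xx ^ 2 \<ge> 1.56508 ^ 2" using xx_lo by (intro power_mono) auto
lemma xx2_hi: "xx ^ 2 \<le> 1.56509 ^ 2" using xx_hi xx_pos by (intro power_mono) auto
lemma xx3_lo: "xx ^ 3 \<ge> 1.56508 ^ 3" using xx_lo by (intro power_mono) auto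

lemma ss_sq: "ss ^ 2 = 3 / xx" using ss2 xx_pos by (simp add: field_simps)
lemma ss_cube: "ss ^ 3 = 3 * ss / xx" using ss_sq by (simp add: power3_eq_cube power2_eq_square) 

lemma N3_1: "ss / xx^2 + 1 / xx^4 + 1 / xx^5 + 2 / xx^6 \<le> 0.975"
proof -
  have "ss / xx^2 + 1 / xx^4 + 1 / xx^5 + 2 / xx^6 = (6 * ss + xx + 2 + xx^2) / (6 * xx^2)"
    unfolding xx4 xx5 xx6 using xx_pos by (simp add: field_simps power2_eq_square)
  also have "\<dots> \<le> 0.975"
    using xx_pos ss_hi xx_hi xx2_lo by (simp add: field_simps)
  finally show ?thesis .
qed

lemma N3_2: "ss^2 / xx^3 + 1 / xx^4 + 2 / xx^5 + 1 / xx^6 \<le> 0.975"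
proof -
  have "ss^2 / xx^3 + 1 / xx^4 + 2 / xx^5 + 1 / xx^6 = (4 * xx^2 + 2 * xx + 1) / (6 * xx^2)"
    unfolding xx4 xx5 xx6 ss_sq using xx_pos xx4 by (simp add: field_simps power2_eq_square eval_nat_numeral)
  also have "\<dots> \<le> 0.975"
    using xx_pos xx_lo xx_hi xx2_lo by (simp add: field_simps)
  finally show ?thesis .
qed

lemma N3_3: "ss^3 / xx^4 + 1 / xx^4 + 3 / xx^5 \<le> 0.975"
proof -
  have "ss^3 / xx^4 + 1 / xx^4 + 3 / xx^5 = (3 * ss + xx + 3) / (6 * xx)"
    unfolding xx4 xx5 ss_cube using xx_pos by (simp add: field_simps)
  also have "\<dots> \<le> 0.975"
    using xx_pos xx_lo ss_hi by (simp add: field_simps)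
  finally show ?thesis .
qed

lemma Ncub: "0.975 / xx + 1 / xx^4 + 3 / xx^6 \<le> 1"
proof -
  have "0.975 / xx + 1 / xx^4 + 3 / xx^6 = (5.85 * xx + xx^2 + 3) / (6 * xx^2)"
    unfolding xx4 xx6 using xx_pos by (simp add: field_simps power2_eq_square)
  also have "\<dots> \<le> 1"
    using xx_pos xx_lo xx_hi xx2_lo by (simp add: field_simps)
  finally show ?thesis .
qed

lemma NC4: "ss^2 / xx^3 + 3 / xx^4 \<le> 1"
proof -
  have "ss^2 / xx^3 = 3 / xx^4" unfolding ss_sq using xx_pos by (simp add: field_simps eval_nat_numeral)
  then show ?thesis unfolding xx4 by simp
qed

lemma Ncyc: "ss^2 / xx^3 + ss^2 / xx^5 + 2 * ss / xx^5 \<le> 1"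
proof -
  have "ss^2 / xx^3 + ss^2 / xx^5 + 2 * ss / xx^5 = (3 * xx^2 + 3 + 2 * ss * xx) / (6 * xx^2)"
  proof -
    have "ss^2 / xx^3 = 3 / xx^4" unfolding ss_sq using xx_pos by (simp add: field_simps eval_nat_numeral)
    moreover have "ss^2 / xx^5 = 3 / xx^6" unfolding ss_sq using xx_pos by (simp add: field_simps eval_nat_numeral)
    moreover have "3 / xx^4 + 3 / xx^6 + 2 * ss / xx^5 = (3 * xx^2 + 3 + 2 * ss * xx) / (6 * xx^2)"
      unfolding xx4 xx5 xx6 using xx_pos by (simp add: field_simps power2_eq_square)
    ultimately show ?thesis by simp
  qed
  also have "\<dots> \<le> 1"
  proof -
    have "ss * xx \<le> 1.38450 * 1.56509" using ss_hi xx_hi ss_pos xx_pos by (intro mult_mono) auto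
    then show ?thesis using xx_pos xx2_lo by (simp add: field_simps)
  qed
  finally show ?thesis .
qed


lemma inv_ss2: "1 / ss^2 = xx / 3" using ss_sq xx_pos by simp

lemma inv_ss_hi: "1 / ss \<le> 0.7223"
  using ss_lo ss_pos by (simp add: field_simps)

definition LF :: "nat \<Rightarrow> nat \<Rightarrow> nat \<Rightarrow> real" where
  "LF p q r = ss^(p+1) * xx^(1+q+r) - ss^q * xx^r - (1 + real p + real q / ss + real r / ss^2)"

lemma LF_r:
  assumes "LF p q r \<ge> 0" shows "LF p q (Suc r) \<ge> 0"
proof -
  let ?C = "1 + real p + real q / ss + real r / ss^2"
  have eq: "LF p q (Suc r) = xx * LF p q r + ((xx - 1) * ?C - 1 / ss^2)"
    by (simp add: LF_def algebra_simps add_divide_distrib diff_divide_distrib)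
  have C1: "?C \<ge> 1" using ss_pos by simp
  have h0: "(xx - 1) * ?C \<ge> (xx - 1) * 1" using C1 xx_lo by (intro mult_left_mono) auto
  then have h: "(xx - 1) * ?C \<ge> xx - 1" by simp
  have "(xx - 1) * ?C - 1 / ss^2 \<ge> 0" unfolding inv_ss2 using h xx_lo[simplified] by linarith
  moreover have "xx * LF p q r \<ge> 0" using assms xx_pos by simp
  ultimately show ?thesis unfolding eq by simp
qed

lemma LF_q:
  assumes "LF p q 0 \<ge> 0" shows "LF p (Suc q) 0 \<ge> 0"
proof -
  let ?C = "1 + real p + real q / ss"
  have eq: "LF p (Suc q) 0 = xx * LF p q 0 + ((xx - ss) * ss^q + (xx - 1) * ?C - 1 / ss)"
    using ss_pos by (simp add: LF_def algebra_simps add_divide_distrib diff_divide_distrib)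
  have C1: "?C \<ge> 1" using ss_pos by simp
  have a0: "(xx - 1) * ?C \<ge> (xx - 1) * 1" using C1 xx_lo by (intro mult_left_mono) auto
  have b0: "(xx - ss) * ss^q \<ge> (xx - ss) * 1" using ss_lo xx_lo ss_hi by (intro mult_left_mono one_le_power) auto
  have a: "(xx - 1) * ?C \<ge> xx - 1" using a0 by simp
  have b: "(xx - ss) * ss^q \<ge> xx - ss" using b0 by simp
  have "(xx - ss) * ss^q + (xx - 1) * ?C - 1 / ss \<ge> 0" using a b inv_ss_hi[simplified] xx_lo[simplified] ss_hi[simplified] by linarith
  moreover have "xx * LF p q 0 \<ge> 0" using assms xx_pos by simp
  ultimately show ?thesis unfolding eq by simp
qed

lemma LF_p:
  assumes "LF p 0 0 \<ge> 0" "p \<ge> 1" shows "LF (Suc p) 0 0 \<ge> 0"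
proof -
  have eq: "LF (Suc p) 0 0 = ss * LF p 0 0 + ((ss - 1) * (real p + 2) - 1)"
    by (simp add: LF_def algebra_simps)
  have "(ss - 1) * (real p + 2) \<ge> (ss - 1) * 3" using assms(2) ss_lo by (intro mult_left_mono) auto
  then have "(ss - 1) * (real p + 2) - 1 \<ge> 0" using ss_lo by simp
  moreover have "ss * LF p 0 0 \<ge> 0" using assms ss_pos by simp
  ultimately show ?thesis unfolding eq by simp
qed

lemma LF_100: "LF 1 0 0 \<ge> 0"
  using ss2 by (simp add: LF_def power2_eq_square)

lemma ssxx2_lo: "ss * xx^2 \<ge> 3.3912"
proof -
  have "ss * xx^2 \<ge> 1.38449 * 1.56508 ^ 2" using ss_lo xx2_lo by (intro mult_mono) auto
  moreover have "(1.38449::real) * 1.56508 ^ 2 \<ge> 3.3912" by (simp add: eval_nat_numeral)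
  ultimately show ?thesis by linarith
qed

lemma LF_010: "LF 0 1 0 \<ge> 0"
proof -
  have e: "LF 0 1 0 = ss * xx^2 - ss - 1 - 1/ss" by (simp add: LF_def power2_eq_square)
  show ?thesis using e ssxx2_lo[simplified] inv_ss_hi[simplified] ss_hi[simplified] by linarith
qed

lemma LF_001: "LF 0 0 1 \<ge> 0"
proof -
  have e: "LF 0 0 1 = ss * xx^2 - xx - 1 - 1/ss^2" by (simp add: LF_def power2_eq_square)
  show ?thesis using e ssxx2_lo[simplified] xx_hi[simplified] inv_ss2 by linarith
qed

lemma LF_pge: "p \<ge> 1 \<Longrightarrow> LF p 0 0 \<ge> 0"
proof (induction p rule: dec_induct)
  case base show ?case by (rule LF_100)
next
  case (step n) then show ?case using LF_p by simp
qed

lemma LF_qge: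
  assumes "q0 \<le> q" "LF p q0 0 \<ge> 0" shows "LF p q 0 \<ge> 0"
  using assms(1)
proof (induction q rule: dec_induct)
  case base show ?case using assms(2) .
next
  case (step n) then show ?case using LF_q by simp
qed

lemma LF_rge:
  assumes "r0 \<le> r" "LF p q r0 \<ge> 0" shows "LF p q r \<ge> 0"
  using assms(1)
proof (induction r rule: dec_induct)
  case base show ?case using assms(2) .
next
  case (step n) then show ?case using LF_r by simp
qed

lemma LF_nonneg: "p + q + r \<ge> 1 \<Longrightarrow> LF p q r \<ge> 0"
proof -
  assume a: "p + q + r \<ge> 1"
  consider "p \<ge> 1" | "p = 0" "q \<ge> 1" | "p = 0" "q = 0" "r \<ge> 1" using a by linarith
  then show ?thesis
  proof cases
    case 1 then show ?thesis using LF_pge LF_qge[of 0 q p] LF_rge[of 0 r p q] by simp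
  next
    case 2 then show ?thesis using LF_010 LF_qge[of 1 q 0] LF_rge[of 0 r 0 q] by simp
  next
    case 3 then show ?thesis using LF_001 LF_rge[of 1 r 0 0] by simp
  qed
qed

lemma leaf_num:
  "p + q + r \<ge> 1 \<Longrightarrow> 1 + real p + real q / ss + real r / ss^2 + ss^q * xx^r \<le> ss^(p+1) * xx^(1+q+r)"
  using LF_nonneg[of p q r] by (simp add: LF_def)

lemma big1_step: "D \<ge> 1 \<Longrightarrow> (xx + real (Suc D)) / xx^(Suc D + 2) \<le> (xx + real D) / xx^(D + 2)"
proof -
  assume D: "D \<ge> 1"
  have "xx + real D + 1 \<le> xx * (xx + real D)"
  proof -
    have "real D * (xx - 1) \<ge> 1 * (xx - 1)" using D xx_lo by (intro mult_right_mono) auto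
    then show ?thesis using xx2_lo xx_hi by (simp add: algebra_simps power2_eq_square)
  qed
  then have "(xx + real (Suc D)) / xx^(Suc D + 2) \<le> (xx * (xx + real D)) / xx^(Suc D + 2)"
    using xx_pos by (intro divide_right_mono) auto
  also have "\<dots> = (xx + real D) / xx^(D + 2)" using xx_pos by simp
  finally show ?thesis .
qed

lemma big1_mono: "D \<ge> 4 \<Longrightarrow> (xx + real D) / xx^(D + 2) \<le> (xx + 4) / xx^6"
proof (induction D rule: dec_induct)
  case base then show ?case by simp
next
  case (step n)
  then show ?case using big1_step[of n] by simp
qed

lemma Nbig1: "D \<ge> 4 \<Longrightarrow> ss / xx^2 + 1 / xx^(D+1) + real D / xx^(D+2) \<le> 1"
proof -
  assume D: "D \<ge> 4"
  have "1 / xx^(D+1) + real D / xx^(D+2) = (xx + real D) / xx^(D + 2)"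
    using xx_pos by (simp add: field_simps)
  also have "\<dots> \<le> (xx + 4) / xx^6" using big1_mono[OF D] .
  finally have a: "1 / xx^(D+1) + real D / xx^(D+2) \<le> (xx + 4) / xx^6" .
  have "ss / xx^2 + (xx + 4) / xx^6 = (6 * ss + xx + 4) / (6 * xx^2)"
    unfolding xx6 using xx_pos by (simp add: field_simps power2_eq_square)
  also have "\<dots> \<le> 1" using xx_pos ss_hi xx_hi xx2_lo by (simp add: field_simps)
  finally show ?thesis using a by linarith
qed

lemma big0_step: "(xx^2 + real (Suc D)) / xx^(Suc D + 3) \<le> (xx^2 + real D) / xx^(D + 3)"
proof -
  have "xx^2 + real D + 1 \<le> xx * (xx^2 + real D)"
  proof -
    have "real D * (xx - 1) \<ge> 0" using xx_lo by simp
    moreover have "xx^3 \<ge> 1.56508 ^ 3" by (rule xx3_lo)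
    ultimately show ?thesis using xx2_hi by (simp add: algebra_simps power2_eq_square power3_eq_cube)
  qed
  then have "(xx^2 + real (Suc D)) / xx^(Suc D + 3) \<le> (xx * (xx^2 + real D)) / xx^(Suc D + 3)"
    using xx_pos by (intro divide_right_mono) auto
  also have "\<dots> = (xx^2 + real D) / xx^(D + 3)"
  proof -
    have "xx^(Suc D + 3) = xx * xx^(D+3)" by (simp add: power_Suc[symmetric])
    then show ?thesis using xx_pos by (simp only:) simp
  qed
  finally show ?thesis .
qed

lemma big0_mono: "D \<ge> 4 \<Longrightarrow> (xx^2 + real D) / xx^(D + 3) \<le> (xx^2 + 4) / xx^7"
proof (induction D rule: dec_induct)
  case base then show ?case by simp
next
  case (step n)
  then show ?case using big0_step[of n] by simp
qed

lemma Nbig0: "D \<ge> 4 \<Longrightarrow> 1 / xx + 1 / xx^(D+1) + real D / xx^(D+3) \<le> 1"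
proof -
  assume D: "D \<ge> 4"
  have "1 / xx^(D+1) + real D / xx^(D+3) = (xx^2 + real D) / xx^(D + 3)"
    using xx_pos by (simp add: field_simps power2_eq_square power_add eval_nat_numeral)
  also have "\<dots> \<le> (xx^2 + 4) / xx^7" using big0_mono[OF D] .
  finally have a: "1 / xx^(D+1) + real D / xx^(D+3) \<le> (xx^2 + 4) / xx^7" .
  have "1 / xx + (xx^2 + 4) / xx^7 = (7 * xx^2 + 4) / (6 * xx^3)"
    unfolding xx7 using xx_pos by (simp add: field_simps power2_eq_square power3_eq_cube)
  also have "\<dots> \<le> 1" using xx_pos xx3_lo xx2_hi by (simp add: field_simps)
  finally show ?thesis using a by linarith
qed




context sg begin

lemma nb_fin: "finite V \<Longrightarrow> finite (neighbors V E v)"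
  by (simp add: neighbors_def)

lemma nb_sub: "neighbors V E v \<subseteq> V" by (auto simp: neighbors_def)

lemma nb_irr: "v \<notin> neighbors V E v" using irrE by (auto simp: neighbors_def)

lemma nb_sym: "u \<in> neighbors V E v \<Longrightarrow> v \<in> V \<Longrightarrow> v \<in> neighbors V E u"
  using symE by (auto simp: neighbors_def)

lemma tf_sub: "triangle_free V E \<Longrightarrow> W \<subseteq> V \<Longrightarrow> triangle_free W E"
  unfolding triangle_free_def by blast

lemma tf_disj:
  assumes "triangle_free V E" "v \<in> V" "u \<in> neighbors V E v"
  shows "neighbors V E u \<inter> neighbors V E v = {}"
  using assms unfolding triangle_free_def neighbors_def by blast

lemma closed_pair:
  assumes "v \<in> V" "u \<in> neighbors V E v"
  shows "insert v (neighbors V E v) \<union> insert u (neighbors V E u) = neighbors V E v \<union> neighbors V E u"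
  using assms nb_sym[OF assms(2,1)] by auto

lemma card_closed_pair:
  assumes "finite V" "triangle_free V E" "v \<in> V" "u \<in> neighbors V E v"
  shows "card (insert v (neighbors V E v) \<union> insert u (neighbors V E u)) = degree V E v + degree V E u"
  unfolding closed_pair[OF assms(3,4)] degree_def
  by (rule card_Un_disjoint) (use assms tf_disj[OF assms(2,3,4)] in \<open>auto simp: nb_fin\<close>)

lemma card_closed:
  assumes "finite V" shows "card (insert v (neighbors V E v)) = degree V E v + 1"
  using assms nb_irr[of v V] by (simp add: degree_def nb_fin)

lemma nb_del: "neighbors (V - S) E u = neighbors V E u - S"
  by (auto simp: neighbors_def)

lemma deg_del1:
  assumes "finite V" "v \<in> V" "u \<in> neighbors V E v"
  shows "degree (V - {v}) E u = degree V E u - 1"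
  unfolding degree_def nb_del using nb_sym[OF assms(3,2)] assms(1)
  by (simp add: nb_fin)

lemma prod_ge2:
  assumes "\<forall>s\<in>S. degree V E s \<ge> 2"
  shows "(\<Prod>s\<in>S. om (degree V E s)) = xx ^ card S"
proof -
  have "(\<Prod>s\<in>S. om (degree V E s)) = (\<Prod>s\<in>S. xx)"
    by (rule prod.cong) (use assms in \<open>auto simp: om_def\<close>)
  then show ?thesis by simp
qed

lemma Bnd_del:
  assumes "finite V" "S \<subseteq> V" "X \<le> (\<Prod>s\<in>S. om (degree V E s))"
  shows "Bnd (V - S) * X \<le> Bnd V"
proof -
  have "Bnd (V - S) * X \<le> Bnd (V - S) * (\<Prod>s\<in>S. om (degree V E s))"
    using assms(3) Bnd_pos by (intro mult_left_mono) (auto simp: less_imp_le)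
  also have "\<dots> \<le> Bnd V" using Bnd_sub[OF assms(1,2), of "{}"] by simp
  finally show ?thesis .
qed

lemma om_ge1: "om d \<ge> 1" using ss_lo xx_lo by (simp add: om_def)

lemma Bnd_le: "finite V \<Longrightarrow> S \<subseteq> V \<Longrightarrow> Bnd (V - S) \<le> Bnd V"
  using Bnd_del[of V S 1] prod_ge_1[of S "\<lambda>s. om (degree V E s)"] om_ge1 by simp


lemma div_bound: fixes B C a b :: real shows "B * a \<le> C * b \<Longrightarrow> a > 0 \<Longrightarrow> B \<le> C * (b / a)"
  by (simp add: field_simps)

lemma T3_bound:
  assumes fin: "finite V" and tf: "triangle_free V E"
    and IH: "\<And>W. W \<subset> V \<Longrightarrow> real (card (MD W)) \<le> Bnd W"
    and vV: "v \<in> V" and dmin: "\<forall>w\<in>V. degree V E w \<ge> 2"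
  shows "real (card (MD V)) \<le> Bnd V * (ss ^ card {u \<in> neighbors V E v. degree V E u = 2}
            / xx ^ (card {u \<in> neighbors V E v. degree V E u = 2} + 1)
          + 1 / xx ^ (degree V E v + 1)
          + (\<Sum>u\<in>neighbors V E v. 1 / xx ^ (degree V E v + degree V E u)))"
proof -
  define N where "N = neighbors V E v"
  define N2 where "N2 = {u \<in> N. degree V E u = 2}"
  define D where "D = degree V E v"
  define m where "m = card N2"
  have finN: "finite N" "finite N2" using fin by (auto simp: N_def N2_def nb_fin)
  have NV: "N \<subseteq> V" "N2 \<subseteq> N" by (auto simp: N_def N2_def nb_sub)
  have C: "Bnd (V - {v}) \<le> Bnd V * (ss^m / xx^(m+1))"
  proof -
    have "degree V E v \<ge> 2" using dmin vV by blast
    then have s1: "(\<Prod>s\<in>{v}. om (degree V E s)) = xx" by (simp add: om_def)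
    have s2: "(\<Prod>t\<in>N2. om (degree V E t)) = xx ^ m"
      unfolding m_def by (rule prod_ge2) (auto simp: N2_def)
    have s3: "(\<Prod>t\<in>N2. om (degree (V - {v}) E t)) = ss ^ m"
    proof -
      have "(\<Prod>t\<in>N2. om (degree (V - {v}) E t)) = (\<Prod>t\<in>N2. ss)"
      proof (rule prod.cong)
        fix t assume t: "t \<in> N2"
        then have "degree (V - {v}) E t = 1"
          using deg_del1[OF fin vV, of t] by (auto simp: N2_def N_def)
        then show "om (degree (V - {v}) E t) = ss" by (simp add: om_def)
      qed simp
      then show ?thesis by (simp add: m_def)
    qed
    have "Bnd (V - {v}) * xx * xx ^ m \<le> Bnd V * ss ^ m"
      using Bnd_sub[OF fin, of "{v}" N2] vV NV nb_irr[of v V] unfolding s1 s2 s3 by (auto simp: N_def)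
    then have "Bnd (V - {v}) * xx ^ (m + 1) \<le> Bnd V * ss ^ m" by (simp add: algebra_simps)
    then show ?thesis by (rule div_bound) (simp add: xx_pos)
  qed
  have A: "Bnd (V - insert v N) \<le> Bnd V * (1 / xx^(D+1))"
  proof -
    have "insert v N \<subseteq> V" using vV NV by auto
    moreover have "(\<Prod>s\<in>insert v N. om (degree V E s)) = xx^(D+1)"
      using prod_ge2[of "insert v N"] dmin vV NV card_closed[OF fin, of v]
      by (auto simp: N_def D_def)
    ultimately have "Bnd (V - insert v N) * xx^(D+1) \<le> Bnd V * 1"
      using Bnd_del[OF fin, of "insert v N" "xx^(D+1)"] by simp
    then show ?thesis by (rule div_bound) (simp add: xx_pos)
  qed
  have B: "Bnd (V - (insert v N \<union> insert u (neighbors V E u))) \<le> Bnd V * (1 / xx^(D + degree V E u))"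
    if u: "u \<in> N" for u
  proof -
    let ?S = "insert v N \<union> insert u (neighbors V E u)"
    have uV: "u \<in> V" using u NV by auto
    have "?S \<subseteq> V" using vV NV uV nb_sub by auto
    moreover have "(\<Prod>s\<in>?S. om (degree V E s)) = xx^(D + degree V E u)"
    proof -
      have "\<forall>s\<in>?S. degree V E s \<ge> 2" using dmin vV uV NV nb_sub[of V u] by blast
      then show ?thesis
        using prod_ge2[of ?S] card_closed_pair[OF fin tf vV, of u] u by (simp add: N_def D_def)
    qed
    ultimately have "Bnd (V - ?S) * xx^(D + degree V E u) \<le> Bnd V * 1"
      using Bnd_del[OF fin, of ?S "xx^(D + degree V E u)"] by simp
    then show ?thesis by (rule div_bound) (simp add: xx_pos)
  qed
  have sub1: "V - {v} \<subset> V" "V - insert v N \<subset> V" using vV by auto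
  have sub2: "V - (insert v N \<union> insert u (neighbors V E u)) \<subset> V" for u using vV by auto
  have "real (card (MD V)) \<le> real (card (MD (V - {v}))) + real (card (MD (V - insert v N)))
     + (\<Sum>u\<in>N. real (card (MD (V - (insert v N \<union> insert u (neighbors V E u))))))"
    using rule_T3[OF fin vV] unfolding N_def[symmetric] of_nat_sum[symmetric] of_nat_add[symmetric] of_nat_le_iff .
  also have "\<dots> \<le> Bnd V * (ss^m / xx^(m+1)) + Bnd V * (1 / xx^(D+1))
     + (\<Sum>u\<in>N. Bnd V * (1 / xx^(D + degree V E u)))"
  proof (intro add_mono sum_mono)
    show "real (card (MD (V - {v}))) \<le> Bnd V * (ss^m / xx^(m+1))" using IH[OF sub1(1)] C by linarith
    show "real (card (MD (V - insert v N))) \<le> Bnd V * (1 / xx^(D+1))" using IH[OF sub1(2)] A by linarith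
    fix u assume "u \<in> N"
    then show "real (card (MD (V - (insert v N \<union> insert u (neighbors V E u))))) \<le> Bnd V * (1 / xx^(D + degree V E u))"
      using IH[OF sub2] B by (meson order_trans)
  qed
  also have "\<dots> = Bnd V * (ss^m / xx^(m+1) + 1 / xx^(D+1) + (\<Sum>u\<in>N. 1 / xx^(D + degree V E u)))"
    by (simp add: algebra_simps sum_distrib_left)
  finally show ?thesis by (simp add: N_def N2_def D_def m_def)
qed


lemma sum_split2:
  assumes finN: "finite N" and dm: "\<forall>u\<in>N. g u \<ge> (2::nat)"
  shows "(\<Sum>u\<in>N. 1 / xx ^ (D + g u)) \<le> real (card {u\<in>N. g u = 2}) / xx^(D+2)
            + real (card N - card {u\<in>N. g u = 2}) / xx^(D+3)"
proof -
  let ?N2 = "{u\<in>N. g u = 2}"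
  have sub: "?N2 \<subseteq> N" by auto
  have "(\<Sum>u\<in>N. 1 / xx ^ (D + g u)) = (\<Sum>u\<in>N - ?N2. 1 / xx ^ (D + g u)) + (\<Sum>u\<in>?N2. 1 / xx ^ (D + g u))"
    by (rule sum.subset_diff[OF sub finN])
  also have "(\<Sum>u\<in>?N2. 1 / xx ^ (D + g u)) = real (card ?N2) / xx^(D+2)"
    by (simp add: sum_divide_distrib)
  also have "(\<Sum>u\<in>N - ?N2. 1 / xx ^ (D + g u)) \<le> (\<Sum>u\<in>N - ?N2. 1 / xx ^ (D + 3))"
  proof (rule sum_mono)
    fix u assume u: "u \<in> N - ?N2"
    then have "g u \<ge> 3" using dm by fastforce
    then have "xx ^ (D + 3) \<le> xx ^ (D + g u)" using xx_lo by (intro power_increasing) auto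
    then show "1 / xx ^ (D + g u) \<le> 1 / xx ^ (D + 3)" using xx_pos by (intro divide_left_mono) auto
  qed
  also have "(\<Sum>u\<in>N - ?N2. 1 / xx ^ (D + 3)) = real (card N - card ?N2) / xx^(D+3)"
    using card_Diff_subset[OF finite_subset[OF sub finN] sub] by simp
  finally show ?thesis by linarith
qed

lemma sum_crude:
  assumes finN: "finite N" and dm: "\<forall>u\<in>N. g u \<ge> (k::nat)"
  shows "(\<Sum>u\<in>N. 1 / xx ^ (D + g u)) \<le> real (card N) / xx^(D+k)"
proof -
  have "(\<Sum>u\<in>N. 1 / xx ^ (D + g u)) \<le> (\<Sum>u\<in>N. 1 / xx ^ (D + k))"
  proof (rule sum_mono)
    fix u assume u: "u \<in> N"
    then have "xx ^ (D + k) \<le> xx ^ (D + g u)" using dm xx_lo by (intro power_increasing) auto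
    then show "1 / xx ^ (D + g u) \<le> 1 / xx ^ (D + k)" using xx_pos by (intro divide_left_mono) auto
  qed
  then show ?thesis by simp
qed

lemma T3_big:
  assumes fin: "finite V" and tf: "triangle_free V E"
    and IH: "\<And>W. W \<subset> V \<Longrightarrow> real (card (MD W)) \<le> Bnd W"
    and vV: "v \<in> V" and dmin: "\<forall>w\<in>V. degree V E w \<ge> 2" and D4: "degree V E v \<ge> 4"
  shows "real (card (MD V)) \<le> Bnd V"
proof -
  define N where "N = neighbors V E v"
  define m where "m = card {u \<in> N. degree V E u = 2}"
  define D where "D = degree V E v"
  have finN: "finite N" using fin by (simp add: N_def nb_fin)
  have cN: "card N = D" by (simp add: N_def D_def degree_def)
  have dN: "\<forall>u\<in>N. degree V E u \<ge> 2" using dmin nb_sub[of V v] by (auto simp: N_def)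
  have main: "real (card (MD V)) \<le> Bnd V * (ss^m / xx^(m+1) + 1 / xx^(D+1) + (\<Sum>u\<in>N. 1 / xx^(D + degree V E u)))"
    using T3_bound[OF fin tf IH vV dmin] by (simp add: N_def m_def D_def)
  have K: "ss^m / xx^(m+1) + 1 / xx^(D+1) + (\<Sum>u\<in>N. 1 / xx^(D + degree V E u)) \<le> 1"
  proof (cases "m = 0")
    case True
    have "(\<Sum>u\<in>N. 1 / xx^(D + degree V E u)) \<le> real m / xx^(D+2) + real (card N - m) / xx^(D+3)"
      using sum_split2[OF finN dN, of D] by (simp add: m_def)
    then have "(\<Sum>u\<in>N. 1 / xx^(D + degree V E u)) \<le> real D / xx^(D+3)" using True cN by simp
    moreover have "1 / xx + 1 / xx ^ (D+1) + real D / xx ^ (D+3) \<le> 1" using Nbig0 D4 by (simp add: D_def)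
    ultimately show ?thesis using True by simp
  next
    case False
    have "(\<Sum>u\<in>N. 1 / xx^(D + degree V E u)) \<le> real D / xx^(D+2)"
      using sum_crude[OF finN dN, of D] cN by simp
    moreover have "ss^m / xx^(m+1) \<le> ss / xx^2"
    proof -
      have r: "ss / xx \<le> 1" "0 \<le> ss / xx" using ss_hi xx_lo ss_pos xx_pos by auto
      have "(ss / xx)^m \<le> (ss / xx)^1" using False r by (intro power_decreasing) auto
      then have "(ss / xx)^m / xx \<le> (ss / xx) / xx" using xx_pos by (intro divide_right_mono) auto
      then show ?thesis by (simp add: power_divide power2_eq_square ac_simps)
    qed
    moreover have "ss / xx^2 + 1 / xx ^ (D+1) + real D / xx ^ (D+2) \<le> 1" using Nbig1 D4 by (simp add: D_def)
    ultimately show ?thesis by linarith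
  qed
  have "Bnd V * (ss^m / xx^(m+1) + 1 / xx^(D+1) + (\<Sum>u\<in>N. 1 / xx^(D + degree V E u))) \<le> Bnd V * 1"
    using K Bnd_pos by (intro mult_left_mono) (auto simp: less_imp_le)
  then show ?thesis using main by simp
qed

lemma T3_three:
  assumes fin: "finite V" and tf: "triangle_free V E"
    and IH: "\<And>W. W \<subset> V \<Longrightarrow> real (card (MD W)) \<le> Bnd W"
    and vV: "v \<in> V" and dmin: "\<forall>w\<in>V. degree V E w \<ge> 2" and D3: "degree V E v = 3"
    and m1: "\<exists>u\<in>neighbors V E v. degree V E u = 2"
  shows "real (card (MD V)) \<le> 0.975 * Bnd V"
proof -
  define N where "N = neighbors V E v"
  define m where "m = card {u \<in> N. degree V E u = 2}"
  have finN: "finite N" using fin by (simp add: N_def nb_fin)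
  have cN: "card N = 3" using D3 by (simp add: N_def degree_def)
  have dN: "\<forall>u\<in>N. degree V E u \<ge> 2" using dmin nb_sub[of V v] by (auto simp: N_def)
  have main: "real (card (MD V)) \<le> Bnd V * (ss^m / xx^(m+1) + 1 / xx^(3+1) + (\<Sum>u\<in>N. 1 / xx^(3 + degree V E u)))"
    using T3_bound[OF fin tf IH vV dmin] D3 by (simp add: N_def m_def)
  have sp: "(\<Sum>u\<in>N. 1 / xx^(3 + degree V E u)) \<le> real m / xx^(3+2) + real (3 - m) / xx^(3+3)"
    using sum_split2[OF finN dN, of 3] cN by (simp add: m_def)
  have mle: "m \<le> 3" unfolding m_def using card_mono[OF finN, of "{u \<in> N. degree V E u = 2}"] cN by auto
  have mge: "m \<ge> 1"
  proof -
    obtain u where "u \<in> N" "degree V E u = 2" using m1 by (auto simp: N_def)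
    then have "{u \<in> N. degree V E u = 2} \<noteq> {}" by auto
    then show ?thesis unfolding m_def using finN by (simp add: card_gt_0_iff Suc_le_eq)
  qed
  have K: "ss^m / xx^(m+1) + 1 / xx^(3+1) + (\<Sum>u\<in>N. 1 / xx^(3 + degree V E u)) \<le> 0.975"
  proof -
    have "ss^m / xx^(m+1) + 1 / xx^(3+1) + real m / xx^(3+2) + real (3 - m) / xx^(3+3) \<le> 0.975"
    proof -
      consider "m = 1" | "m = 2" | "m = 3" using mle mge by linarith
      then show ?thesis
      proof cases
        case 1 then show ?thesis using N3_1 by (simp add: eval_nat_numeral)
      next
        case 2 then show ?thesis using N3_2 by (simp add: eval_nat_numeral)
      next
        case 3 then show ?thesis using N3_3 by (simp add: eval_nat_numeral)
      qed
    qed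
    then show ?thesis using sp by linarith
  qed
  have "Bnd V * (ss^m / xx^(m+1) + 1 / xx^(3+1) + (\<Sum>u\<in>N. 1 / xx^(3 + degree V E u))) \<le> Bnd V * 0.975"
    using K Bnd_pos by (intro mult_left_mono) (auto simp: less_imp_le)
  with main have "real (card (MD V)) \<le> Bnd V * 0.975" by (rule order_trans)
  then show ?thesis by (simp only: mult.commute)
qed


lemma A_bound:
  assumes fin: "finite V" and vV: "v \<in> V" and dmin: "\<forall>w\<in>V. degree V E w \<ge> 2"
  shows "Bnd (V - insert v (neighbors V E v)) \<le> Bnd V * (1 / xx^(degree V E v + 1))"
proof -
  have "insert v (neighbors V E v) \<subseteq> V" using vV nb_sub by auto
  moreover have "(\<Prod>s\<in>insert v (neighbors V E v). om (degree V E s)) = xx^(degree V E v+1)"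
    using prod_ge2[of "insert v (neighbors V E v)"] dmin vV nb_sub[of V v] card_closed[OF fin, of v]
    by auto
  ultimately have "Bnd (V - insert v (neighbors V E v)) * xx^(degree V E v+1) \<le> Bnd V * 1"
    using Bnd_del[OF fin, of "insert v (neighbors V E v)" "xx^(degree V E v+1)"] by simp
  then show ?thesis by (rule div_bound) (simp add: xx_pos)
qed

lemma B_bound:
  assumes fin: "finite V" and tf: "triangle_free V E" and vV: "v \<in> V" and dmin: "\<forall>w\<in>V. degree V E w \<ge> 2"
    and u: "u \<in> neighbors V E v"
  shows "Bnd (V - (insert v (neighbors V E v) \<union> insert u (neighbors V E u)))
           \<le> Bnd V * (1 / xx^(degree V E v + degree V E u))"
proof -
  let ?S = "insert v (neighbors V E v) \<union> insert u (neighbors V E u)"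
  have uV: "u \<in> V" using u nb_sub by auto
  have "?S \<subseteq> V" using vV uV nb_sub by auto
  moreover have "(\<Prod>s\<in>?S. om (degree V E s)) = xx^(degree V E v + degree V E u)"
  proof -
    have "\<forall>s\<in>?S. degree V E s \<ge> 2" using dmin vV uV nb_sub[of V u] nb_sub[of V v] by blast
    then show ?thesis
      using prod_ge2[of ?S] card_closed_pair[OF fin tf vV u] by simp
  qed
  ultimately have "Bnd (V - ?S) * xx^(degree V E v + degree V E u) \<le> Bnd V * 1"
    using Bnd_del[OF fin, of ?S "xx^(degree V E v + degree V E u)"] by simp
  then show ?thesis by (rule div_bound) (simp add: xx_pos)
qed

lemma T3_real:
  assumes fin: "finite V" and vV: "v \<in> V"
  shows "real (card (MD V)) \<le> real (card (MD (V - {v}))) + real (card (MD (V - insert v (neighbors V E v))))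
     + (\<Sum>u\<in>neighbors V E v. real (card (MD (V - (insert v (neighbors V E v) \<union> insert u (neighbors V E u))))))"
  using rule_T3[OF fin vV] unfolding of_nat_sum[symmetric] of_nat_add[symmetric] of_nat_le_iff .

lemma cubic:
  assumes fin: "finite V" and tf: "triangle_free V E"
    and IH: "\<And>W. W \<subset> V \<Longrightarrow> real (card (MD W)) \<le> Bnd W"
    and vV: "v \<in> V" and dmin: "\<forall>w\<in>V. degree V E w \<ge> 2" and D3: "degree V E v = 3"
    and nb3: "\<forall>u\<in>neighbors V E v. degree V E u = 3"
    and u1: "u1 \<in> neighbors V E v" and z: "z \<in> neighbors V E u1" and zv: "z \<noteq> v"
    and dz: "degree V E z = 3"
  shows "real (card (MD V)) \<le> Bnd V"
proof -
  define H where "H = V - {v}"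
  have finH: "finite H" using fin by (simp add: H_def)
  have tfH: "triangle_free H E" using tf_sub[OF tf] by (simp add: H_def)
  have IHH: "\<And>W. W \<subset> H \<Longrightarrow> real (card (MD W)) \<le> Bnd W" using IH by (auto simp: H_def)
  have u1V: "u1 \<in> V" using u1 nb_sub by auto
  have zV: "z \<in> V" using z nb_sub by auto
  have zH: "z \<in> H" using zV zv by (simp add: H_def)
  have same: "degree H E w = degree V E w" if "w \<in> V" "w \<notin> neighbors V E v" for w
  proof -
    have "v \<notin> neighbors V E w" using that nb_sym[of v V w] by blast
    then show ?thesis by (simp add: H_def degree_def nb_del)
  qed
  have dminH: "\<forall>w\<in>H. degree H E w \<ge> 2"
  proof
    fix w assume w: "w \<in> H"
    show "degree H E w \<ge> 2"
    proof (cases "w \<in> neighbors V E v")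
      case True
      then show ?thesis using deg_del1[OF fin vV True] nb3 by (simp add: H_def)
    next
      case False
      then show ?thesis using same[of w] w dmin by (auto simp: H_def)
    qed
  qed
  have znv: "z \<notin> neighbors V E v"
  proof
    assume "z \<in> neighbors V E v"
    then have "E v z" "E v u1" "E u1 z" using u1 z by (auto simp: neighbors_def)
    then show False using tf vV u1V zV unfolding triangle_free_def by blast
  qed
  have dzH: "degree H E z = 3" using same[OF zV znv] dz by simp
  have u1H: "u1 \<in> neighbors H E z"
  proof -
    have "u1 \<noteq> v" using u1 nb_irr by auto
    moreover have "E z u1" using z symE by (auto simp: neighbors_def)
    ultimately show ?thesis using u1V by (auto simp: H_def neighbors_def)
  qed
  have du1H: "degree H E u1 = 2" using deg_del1[OF fin vV u1] nb3 u1 by (simp add: H_def)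
  have ex: "\<exists>u\<in>neighbors H E z. degree H E u = 2" using u1H du1H by blast
  have inner: "real (card (MD H)) \<le> 0.975 * Bnd H"
    by (rule T3_three[OF finH tfH IHH zH dminH dzH ex])
  have BH: "Bnd H * xx \<le> Bnd V"
    using Bnd_del[OF fin, of "{v}" xx] vV D3 by (simp add: H_def om_def)
  have C: "real (card (MD (V - {v}))) \<le> Bnd V * (0.975 / xx)"
  proof -
    have "real (card (MD H)) * xx \<le> 0.975 * (Bnd H * xx)" using inner xx_pos by (simp add: mult_right_mono)
    also have "\<dots> \<le> Bnd V * 0.975" using BH by (simp add: mult.commute)
    finally show ?thesis unfolding H_def[symmetric] by (rule div_bound) (simp add: xx_pos)
  qed
  have A: "real (card (MD (V - insert v (neighbors V E v)))) \<le> Bnd V * (1 / xx^4)"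
    using IH[of "V - insert v (neighbors V E v)"] A_bound[OF fin vV dmin] vV D3 by fastforce
  have B: "real (card (MD (V - (insert v (neighbors V E v) \<union> insert u (neighbors V E u))))) \<le> Bnd V * (1 / xx^6)"
    if u: "u \<in> neighbors V E v" for u
  proof -
    have "real (card (MD (V - (insert v (neighbors V E v) \<union> insert u (neighbors V E u))))) \<le> Bnd (V - (insert v (neighbors V E v) \<union> insert u (neighbors V E u)))"
      using vV by (intro IH) auto
    also have "\<dots> \<le> Bnd V * (1 / xx^(degree V E v + degree V E u))" by (rule B_bound[OF fin tf vV dmin u])
    finally show ?thesis using D3 nb3 u by simp
  qed
  have "real (card (MD V)) \<le> Bnd V * (0.975 / xx) + Bnd V * (1 / xx^4) + (\<Sum>u\<in>neighbors V E v. Bnd V * (1 / xx^6))"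
    using T3_real[OF fin vV] C A B sum_mono[of "neighbors V E v"] by (smt (verit, ccfv_SIG) sum_mono)
  also have "\<dots> = Bnd V * (0.975 / xx + 1 / xx^4 + 3 / xx^6)"
    using D3 by (simp add: degree_def algebra_simps)
  also have "\<dots> \<le> Bnd V * 1" using Ncub Bnd_pos by (intro mult_left_mono) (auto simp: less_imp_le)
  finally show ?thesis by simp
qed


lemma Bnd_gen:
  assumes fin: "finite V" and SV: "S \<subseteq> V" and TS: "T \<subseteq> V - S"
    and d2: "\<forall>s\<in>S \<union> T. degree V E s \<ge> 2" and d1: "\<forall>t\<in>T. degree (V - S) E t \<le> c" and c1: "c \<le> 1"
  shows "Bnd (V - S) \<le> Bnd V * (om c ^ card T / xx ^ (card S + card T))"
proof -
  have fT: "finite T" using fin TS finite_subset by blast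
  have a: "(\<Prod>s\<in>S. om (degree V E s)) = xx ^ card S" using d2 by (intro prod_ge2) auto
  have b: "(\<Prod>s\<in>T. om (degree V E s)) = xx ^ card T" using d2 by (intro prod_ge2) auto
  have c: "(\<Prod>t\<in>T. om (degree (V - S) E t)) \<le> (\<Prod>t\<in>T. om c)"
    by (rule prod_mono) (use d1 om_mono om_pos in \<open>auto simp: less_imp_le\<close>)
  have "Bnd (V - S) * xx ^ card S * xx ^ card T \<le> Bnd V * (\<Prod>t\<in>T. om (degree (V - S) E t))"
    using Bnd_sub[OF fin SV TS] unfolding a b .
  also have "\<dots> \<le> Bnd V * om c ^ card T"
    using c Bnd_pos by (intro mult_left_mono) (auto simp: less_imp_le)
  finally have "Bnd (V - S) * xx ^ (card S + card T) \<le> Bnd V * om c ^ card T"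
    by (simp add: power_add algebra_simps)
  then show ?thesis by (rule div_bound) (simp add: xx_pos)
qed

lemma card2_obtain:
  assumes "finite A" "card A = 2" "a \<in> A"
  obtains b where "A = {a, b}" "b \<noteq> a"
proof -
  have "card (A - {a}) = 1" using assms by simp
  then obtain b where "A - {a} = {b}" by (auto simp: card_Suc_eq)
  then have "A = {a, b}" "b \<noteq> a" using assms(3) by auto
  then show ?thesis using that by blast
qed

lemma cycle:
  assumes fin: "finite V" and tf: "triangle_free V E"
    and IH: "\<And>W. W \<subset> V \<Longrightarrow> real (card (MD W)) \<le> Bnd W"
    and vV: "v \<in> V" and d2: "\<forall>w\<in>V. degree V E w = 2"
  shows "real (card (MD V)) \<le> Bnd V"
proof -
  have dmin: "\<forall>w\<in>V. degree V E w \<ge> 2" using d2 by simp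
  have cNv: "card (neighbors V E v) = 2" using d2 vV by (simp add: degree_def)
  then obtain u1 u2 where Nv: "neighbors V E v = {u1, u2}" and u12: "u1 \<noteq> u2"
    by (auto simp: card_2_iff)
  have u1: "u1 \<in> neighbors V E v" and u2: "u2 \<in> neighbors V E v" using Nv by auto
  have u1V: "u1 \<in> V" and u2V: "u2 \<in> V" using u1 u2 nb_sub by auto
  have vu: "v \<noteq> u1" "v \<noteq> u2" using u1 u2 nb_irr[of v V] by auto
  have vN1: "v \<in> neighbors V E u1" using nb_sym[OF u1 vV] .
  have vN2: "v \<in> neighbors V E u2" using nb_sym[OF u2 vV] .
  obtain z1 where Nu1: "neighbors V E u1 = {v, z1}" and z1v: "z1 \<noteq> v"
    using card2_obtain[OF nb_fin[OF fin] _ vN1] d2 u1V by (auto simp: degree_def)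
  obtain z2 where Nu2: "neighbors V E u2 = {v, z2}" and z2v: "z2 \<noteq> v"
    using card2_obtain[OF nb_fin[OF fin] _ vN2] d2 u2V by (auto simp: degree_def)
  have z1N: "z1 \<in> neighbors V E u1" and z2N: "z2 \<in> neighbors V E u2" using Nu1 Nu2 by auto
  have z1V: "z1 \<in> V" and z2V: "z2 \<in> V" using z1N z2N nb_sub by auto
  have Ev1: "E v u1" and Ev2: "E v u2" using u1 u2 by (auto simp: neighbors_def)
  have nE12: "\<not> E u1 u2" using tf vV u1V u2V Ev1 Ev2 unfolding triangle_free_def by blast
  have z1u1: "z1 \<noteq> u1" using z1N nb_irr by auto
  have z2u2: "z2 \<noteq> u2" using z2N nb_irr by auto
  have z1u2: "z1 \<noteq> u2" using z1N nE12 by (auto simp: neighbors_def)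
  have z2u1: "z2 \<noteq> u1" using z2N nE12 symE by (auto simp: neighbors_def)
  have u1z1: "u1 \<in> neighbors V E z1" using nb_sym[OF z1N u1V] .
  have u2z2: "u2 \<in> neighbors V E z2" using nb_sym[OF z2N u2V] .
  have cz1: "card (neighbors V E z1) = 2" "card (neighbors V E z2) = 2"
    using d2 z1V z2V by (auto simp: degree_def)
  let ?Sv = "insert v (neighbors V E v)"
  have Sv: "?Sv = {v, u1, u2}" using Nv by auto
  have SvV: "?Sv \<subseteq> V" using vV u1V u2V Sv by auto
  have C: "Bnd (V - {v}) \<le> Bnd V * (ss ^ 2 / xx ^ 3)"
  proof -
    have "Bnd (V - {v}) \<le> Bnd V * (om 1 ^ card {u1, u2} / xx ^ (card {v} + card {u1, u2}))"
    proof (rule Bnd_gen[OF fin])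
      show "\<forall>t\<in>{u1, u2}. degree (V - {v}) E t \<le> 1"
        using deg_del1[OF fin vV u1] deg_del1[OF fin vV u2] d2 u1V u2V by auto
    qed (use vV u1V u2V dmin u1 u2 nb_irr[of v V] in auto)
    then show ?thesis using u12 by (simp add: om_def power2_eq_square power3_eq_cube)
  qed
  have CI: "real (card (MD (V - {v}))) \<le> Bnd V * (ss ^ 2 / xx ^ 3)"
    using IH[of "V - {v}"] C vV by fastforce
  have sumN: "(\<Sum>u\<in>neighbors V E v. real (card (MD (V - (?Sv \<union> insert u (neighbors V E u))))))
      = real (card (MD (V - (?Sv \<union> insert u1 (neighbors V E u1))))) + real (card (MD (V - (?Sv \<union> insert u2 (neighbors V E u2)))))"
    unfolding Nv using u12 by simp
  have T3: "real (card (MD V)) \<le> real (card (MD (V - {v}))) + real (card (MD (V - ?Sv)))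
      + real (card (MD (V - (?Sv \<union> insert u1 (neighbors V E u1))))) + real (card (MD (V - (?Sv \<union> insert u2 (neighbors V E u2)))))"
    using T3_real[OF fin vV] sumN by simp
  show ?thesis
  proof (cases "z1 = z2")
    case True
    have Nz: "neighbors V E z1 = {u1, u2}"
    proof -
      have "{u1, u2} \<subseteq> neighbors V E z1" using u1z1 u2z2 True by auto
      moreover have "card {u1, u2} = card (neighbors V E z1)" using cz1 u12 by simp
      ultimately show ?thesis using card_subset_eq[OF nb_fin[OF fin]] by metis
    qed
    have A: "Bnd (V - ?Sv) \<le> Bnd V * (1 / xx ^ 4)"
    proof -
      have "Bnd (V - ?Sv) \<le> Bnd V * (om 0 ^ card {z1} / xx ^ (card ?Sv + card {z1}))"
      proof (rule Bnd_gen[OF fin SvV])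
        show "{z1} \<subseteq> V - ?Sv" using z1V z1v z1u1 z1u2 Sv by auto
        show "\<forall>t\<in>{z1}. degree (V - ?Sv) E t \<le> 0"
          using Nz Sv by (simp add: degree_def nb_del)
      qed (use vV u1V u2V z1V dmin Sv in auto)
      moreover have "card ?Sv = 3" using Sv u12 vu by simp
      ultimately show ?thesis by (simp add: om_def)
    qed
    have B1: "Bnd (V - (?Sv \<union> insert u1 (neighbors V E u1))) \<le> Bnd V * (1 / xx ^ 4)"
      using B_bound[OF fin tf vV dmin u1] d2 vV u1V by simp
    have B2: "Bnd (V - (?Sv \<union> insert u2 (neighbors V E u2))) \<le> Bnd V * (1 / xx ^ 4)"
      using B_bound[OF fin tf vV dmin u2] d2 vV u2V by simp
    have "real (card (MD V)) \<le> Bnd V * (ss ^ 2 / xx ^ 3) + Bnd V * (1 / xx ^ 4) + Bnd V * (1 / xx ^ 4) + Bnd V * (1 / xx ^ 4)"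
      using T3 CI IH[of "V - ?Sv"] IH[of "V - (?Sv \<union> insert u1 (neighbors V E u1))"]
        IH[of "V - (?Sv \<union> insert u2 (neighbors V E u2))"] A B1 B2 vV by fastforce
    also have "\<dots> = Bnd V * (ss ^ 2 / xx ^ 3 + 3 / xx ^ 4)" by (simp add: algebra_simps)
    also have "\<dots> \<le> Bnd V * 1" using NC4 Bnd_pos by (intro mult_left_mono) (auto simp: less_imp_le)
    finally show ?thesis by simp
  next
    case False
    have A: "Bnd (V - ?Sv) \<le> Bnd V * (ss ^ 2 / xx ^ 5)"
    proof -
      have "Bnd (V - ?Sv) \<le> Bnd V * (om 1 ^ card {z1, z2} / xx ^ (card ?Sv + card {z1, z2}))"
      proof (rule Bnd_gen[OF fin SvV])
        show "{z1, z2} \<subseteq> V - ?Sv" using z1V z1v z1u1 z1u2 z2V z2v z2u1 z2u2 Sv by auto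
        have "degree (V - ?Sv) E z1 \<le> 1"
        proof -
          have "neighbors (V - ?Sv) E z1 \<subseteq> neighbors V E z1 - {u1}" unfolding nb_del using Sv by blast
          then have "degree (V - ?Sv) E z1 \<le> card (neighbors V E z1 - {u1})"
            unfolding degree_def by (intro card_mono) (auto simp: nb_fin fin)
          then show ?thesis using cz1 u1z1 by (simp add: nb_fin fin)
        qed
        moreover have "degree (V - ?Sv) E z2 \<le> 1"
        proof -
          have "neighbors (V - ?Sv) E z2 \<subseteq> neighbors V E z2 - {u2}" unfolding nb_del using Sv by blast
          then have "degree (V - ?Sv) E z2 \<le> card (neighbors V E z2 - {u2})"
            unfolding degree_def by (intro card_mono) (auto simp: nb_fin fin)
          then show ?thesis using cz1 u2z2 by (simp add: nb_fin fin)
        qed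
        ultimately show "\<forall>t\<in>{z1, z2}. degree (V - ?Sv) E t \<le> 1" by simp
      qed (use vV u1V u2V z1V z2V dmin Sv in auto)
      moreover have "card ?Sv = 3" using Sv u12 vu by simp
      ultimately show ?thesis using False by (simp add: om_def power2_eq_square)
    qed
    have B: "Bnd (V - (?Sv \<union> insert ua (neighbors V E ua))) \<le> Bnd V * (ss / xx ^ 5)"
      if ua: "ua \<in> neighbors V E v" and za: "neighbors V E ua = {v, za}"
        and zbN: "zb \<in> neighbors V E ub" and ub: "ub \<in> neighbors V E v" and uab: "ua \<noteq> ub"
        and zab: "za \<noteq> zb" and zbv: "zb \<noteq> v" and zbu: "zb \<noteq> ua" "zb \<noteq> ub"
        and Nzb: "card (neighbors V E zb) = 2"
      for ua ub za zb
    proof -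
      let ?S = "?Sv \<union> insert ua (neighbors V E ua)"
      have uaV: "ua \<in> V" "ub \<in> V" using ua ub nb_sub by auto
      have zaV: "za \<in> V" using za nb_sub[of V ua] by auto
      have zbV: "zb \<in> V" using zbN nb_sub by auto
      have S: "?S = {v, u1, u2, za}" using Sv za ua Nv by auto
      have SV: "?S \<subseteq> V" using S vV u1V u2V zaV by auto
      have cS: "card ?S = 4" using card_closed_pair[OF fin tf vV ua] d2 vV uaV by simp
      have ubS: "ub \<in> ?S" using ub by auto
      have "Bnd (V - ?S) \<le> Bnd V * (om 1 ^ card {zb} / xx ^ (card ?S + card {zb}))"
      proof (rule Bnd_gen[OF fin SV])
        have zbNv: "zb \<notin> neighbors V E v"
        proof
          assume "zb \<in> neighbors V E v"
          then have "E v zb" "E v ub" "E ub zb" using ub zbN by (auto simp: neighbors_def)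
          then show False using tf vV uaV zbV unfolding triangle_free_def by blast
        qed
        have "zb \<notin> insert ua (neighbors V E ua)" using za zbv zbu(1) zab by simp
        then show "{zb} \<subseteq> V - ?S" using zbV zbNv zbv by simp
        have "neighbors (V - ?S) E zb \<subseteq> neighbors V E zb - {ub}" unfolding nb_del using ubS by blast
        then have "degree (V - ?S) E zb \<le> card (neighbors V E zb - {ub})"
          unfolding degree_def by (intro card_mono) (auto simp: nb_fin fin)
        also have "\<dots> = 1" using Nzb nb_sym[OF zbN uaV(2)] by (simp add: nb_fin fin)
        finally show "\<forall>t\<in>{zb}. degree (V - ?S) E t \<le> 1" by simp
        show "\<forall>s\<in>?S \<union> {zb}. degree V E s \<ge> 2" using SV zbV dmin by blast
      qed simp
      moreover have "xx * xx ^ 4 = xx ^ 5" by (simp add: eval_nat_numeral)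
      ultimately show ?thesis using cS by (simp add: om_def)
    qed
    have B1: "Bnd (V - (?Sv \<union> insert u1 (neighbors V E u1))) \<le> Bnd V * (ss / xx ^ 5)"
      by (rule B[OF u1 Nu1 z2N u2 u12 False z2v z2u1 z2u2 cz1(2)])
    have B2: "Bnd (V - (?Sv \<union> insert u2 (neighbors V E u2))) \<le> Bnd V * (ss / xx ^ 5)"
      using B[OF u2 Nu2 z1N u1 u12[symmetric] _ z1v z1u2 z1u1 cz1(1)] False by auto
    have i1: "real (card (MD (V - ?Sv))) \<le> Bnd V * (ss ^ 2 / xx ^ 5)"
      by (rule order_trans[OF IH A]) (use vV in auto)
    have i2: "real (card (MD (V - (?Sv \<union> insert u1 (neighbors V E u1))))) \<le> Bnd V * (ss / xx ^ 5)"
      by (rule order_trans[OF IH B1]) (use vV in auto)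
    have i3: "real (card (MD (V - (?Sv \<union> insert u2 (neighbors V E u2))))) \<le> Bnd V * (ss / xx ^ 5)"
      by (rule order_trans[OF IH B2]) (use vV in auto)
    have "real (card (MD V)) \<le> Bnd V * (ss ^ 2 / xx ^ 3) + Bnd V * (ss ^ 2 / xx ^ 5) + Bnd V * (ss / xx ^ 5) + Bnd V * (ss / xx ^ 5)"
      using T3 CI i1 i2 i3 by linarith
    also have "\<dots> = Bnd V * (ss ^ 2 / xx ^ 3 + ss ^ 2 / xx ^ 5 + 2 * ss / xx ^ 5)" by (simp add: algebra_simps)
    also have "\<dots> \<le> Bnd V * 1" using Ncyc Bnd_pos by (intro mult_left_mono) (auto simp: less_imp_le)
    finally show ?thesis by simp
  qed
qed


lemma split3_eq:
  assumes "\<forall>w\<in>W. g w \<ge> (1::nat)"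
  shows "W = {w\<in>W. g w = 1} \<union> ({w\<in>W. g w = 2} \<union> {w\<in>W. g w \<ge> 3})"
  using assms by force

lemma sum3:
  fixes f :: "'a \<Rightarrow> real"
  assumes fin: "finite W" and g1: "\<forall>w\<in>W. g w \<ge> (1::nat)"
  shows "(\<Sum>w\<in>W. f w) = (\<Sum>w\<in>{w\<in>W. g w = 1}. f w) + (\<Sum>w\<in>{w\<in>W. g w = 2}. f w) + (\<Sum>w\<in>{w\<in>W. g w \<ge> 3}. f w)"
proof -
  have "(\<Sum>w\<in>W. f w) = (\<Sum>w\<in>{w\<in>W. g w = 1} \<union> ({w\<in>W. g w = 2} \<union> {w\<in>W. g w \<ge> 3}). f w)"
    using split3_eq[OF g1] by simp
  also have "\<dots> = (\<Sum>w\<in>{w\<in>W. g w = 1}. f w) + (\<Sum>w\<in>{w\<in>W. g w = 2} \<union> {w\<in>W. g w \<ge> 3}. f w)"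
    by (rule sum.union_disjoint) (use fin in auto)
  also have "(\<Sum>w\<in>{w\<in>W. g w = 2} \<union> {w\<in>W. g w \<ge> 3}. f w) = (\<Sum>w\<in>{w\<in>W. g w = 2}. f w) + (\<Sum>w\<in>{w\<in>W. g w \<ge> 3}. f w)"
    by (rule sum.union_disjoint) (use fin in auto)
  finally show ?thesis by simp
qed

lemma prod3:
  fixes f :: "'a \<Rightarrow> real"
  assumes fin: "finite W" and g1: "\<forall>w\<in>W. g w \<ge> (1::nat)"
  shows "(\<Prod>w\<in>W. f w) = (\<Prod>w\<in>{w\<in>W. g w = 1}. f w) * (\<Prod>w\<in>{w\<in>W. g w = 2}. f w) * (\<Prod>w\<in>{w\<in>W. g w \<ge> 3}. f w)"
proof -
  have "(\<Prod>w\<in>W. f w) = (\<Prod>w\<in>{w\<in>W. g w = 1} \<union> ({w\<in>W. g w = 2} \<union> {w\<in>W. g w \<ge> 3}). f w)"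
    using split3_eq[OF g1] by simp
  also have "\<dots> = (\<Prod>w\<in>{w\<in>W. g w = 1}. f w) * (\<Prod>w\<in>{w\<in>W. g w = 2} \<union> {w\<in>W. g w \<ge> 3}. f w)"
    by (rule prod.union_disjoint) (use fin in auto)
  also have "(\<Prod>w\<in>{w\<in>W. g w = 2} \<union> {w\<in>W. g w \<ge> 3}. f w) = (\<Prod>w\<in>{w\<in>W. g w = 2}. f w) * (\<Prod>w\<in>{w\<in>W. g w \<ge> 3}. f w)"
    by (rule prod.union_disjoint) (use fin in auto)
  finally show ?thesis by simp
qed

lemma card3:
  assumes fin: "finite W" and g1: "\<forall>w\<in>W. g w \<ge> (1::nat)"
  shows "card W = card {w\<in>W. g w = 1} + card {w\<in>W. g w = 2} + card {w\<in>W. g w \<ge> 3}"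
proof -
  have "card W = card ({w\<in>W. g w = 1} \<union> ({w\<in>W. g w = 2} \<union> {w\<in>W. g w \<ge> 3}))"
    using split3_eq[OF g1] by simp
  also have "\<dots> = card {w\<in>W. g w = 1} + card ({w\<in>W. g w = 2} \<union> {w\<in>W. g w \<ge> 3})"
    by (rule card_Un_disjoint) (use fin in auto)
  also have "card ({w\<in>W. g w = 2} \<union> {w\<in>W. g w \<ge> 3}) = card {w\<in>W. g w = 2} + card {w\<in>W. g w \<ge> 3}"
    by (rule card_Un_disjoint) (use fin in auto)
  finally show ?thesis by simp
qed


lemma leaf_bound:
  assumes fin: "finite V" and tf: "triangle_free V E"
    and IH: "\<And>W. W \<subset> V \<Longrightarrow> real (card (MD W)) \<le> Bnd W"
    and vV: "v \<in> V" and Nv: "neighbors V E v = {u}" and du: "degree V E u \<ge> 2"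
  shows "real (card (MD V)) \<le> Bnd V"
proof -
  note v1 = nb_single[OF Nv]
  have uV: "u \<in> V" using v1(1) .
  have uNv: "u \<in> neighbors V E v" using Nv by simp
  have vNu: "v \<in> neighbors V E u" using nb_sym[OF uNv vV] .
  have dv: "degree V E v = 1" using Nv by (simp add: degree_def)
  have uv: "u \<noteq> v" using uNv nb_irr by auto
  define W where "W = neighbors V E u - {v}"
  define W1 where "W1 = {w\<in>W. degree V E w = 1}"
  define W2 where "W2 = {w\<in>W. degree V E w = 2}"
  define W3 where "W3 = {w\<in>W. degree V E w \<ge> 3}"
  define p where "p = card W1"
  define q where "q = card W2"
  define r where "r = card W3"
  define P where "P = ss^(p+1) * xx^(1+q+r)"
  have Ppos: "P > 0" using ss_pos xx_pos by (simp add: P_def)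
  have finW: "finite W" using fin by (simp add: W_def nb_fin)
  have WV: "W \<subseteq> V" using nb_sub by (auto simp: W_def)
  have wprops: "w \<noteq> v" "w \<noteq> u" "w \<in> V" "u \<in> neighbors V E w" if "w \<in> W" for w
    using that nb_sym[of w V u] uV nb_irr[of u V] by (auto simp: W_def nb_sub[THEN subsetD])
  have g1: "\<forall>w\<in>W. degree V E w \<ge> 1"
  proof
    fix w assume w: "w \<in> W"
    have "finite (neighbors V E w)" using fin by (simp add: nb_fin)
    then have "card (neighbors V E w) > 0" using wprops(4)[OF w] by (auto simp: card_gt_0_iff)
    then show "degree V E w \<ge> 1" by (simp add: degree_def)
  qed
  have cW: "card W = degree V E u - 1" using vNu fin by (simp add: W_def degree_def nb_fin)
  have pqr: "p + q + r = card W" using card3[OF finW g1] by (simp add: p_def q_def r_def W1_def W2_def W3_def)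
  have pqr1: "p + q + r \<ge> 1" using pqr cW du by simp
  have PW: "(\<Prod>w\<in>W. om (degree V E w)) = ss^p * xx^(q+r)"
  proof -
    have a: "(\<Prod>w\<in>W1. om (degree V E w)) = ss^p" unfolding p_def W1_def
      by (simp add: om_def)
    have b: "(\<Prod>w\<in>W2. om (degree V E w)) = xx^q" unfolding q_def W2_def
      by (simp add: om_def)
    have c: "(\<Prod>w\<in>W3. om (degree V E w)) = xx^r" unfolding r_def W3_def
      by (rule prod_ge2) auto
    show ?thesis using prod3[OF finW g1, of "\<lambda>w. om (degree V E w)"] a b c
      by (simp add: W1_def W2_def W3_def power_add)
  qed
  let ?S1 = "insert u (neighbors V E u)"
  have S1: "?S1 = insert u (insert v W)" using vNu by (auto simp: W_def)
  have S1V: "?S1 \<subseteq> V" using uV nb_sub by auto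
  have PS1: "(\<Prod>s\<in>?S1. om (degree V E s)) = P"
  proof -
    have "u \<notin> insert v W" "v \<notin> W" using uv by (auto simp: W_def nb_irr)
    then have "(\<Prod>s\<in>?S1. om (degree V E s)) = om (degree V E u) * (om (degree V E v) * (\<Prod>w\<in>W. om (degree V E w)))"
      unfolding S1 using finW by simp
    also have "\<dots> = xx * (ss * (ss^p * xx^(q+r)))" using du dv PW by (simp add: om_def)
    finally show ?thesis by (simp add: P_def power_add algebra_simps)
  qed
  have B1: "Bnd (V - ?S1) \<le> Bnd V * (1 / P)"
  proof -
    have "Bnd (V - ?S1) * P \<le> Bnd V * 1" using Bnd_del[OF fin S1V, of P] PS1 by simp
    then show ?thesis by (rule div_bound) (rule Ppos)
  qed
  have B2: "Bnd (V - {u, v}) \<le> Bnd V * (ss^q * xx^r / P)"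
  proof -
    have sub: "{u, v} \<subseteq> V" using uV vV by auto
    have TS: "W \<subseteq> V - {u, v}" using WV by (auto simp: W_def nb_irr)
    have dd: "degree (V - {u, v}) E w = degree V E w - 1" if w: "w \<in> W" for w
    proof -
      have "v \<notin> neighbors V E w"
      proof
        assume "v \<in> neighbors V E w"
        then have "E v w" using symE by (auto simp: neighbors_def)
        then have "w = u" using v1(3) wprops(3)[OF w] by blast
        then show False using wprops(2)[OF w] by simp
      qed
      then have "neighbors (V - {u, v}) E w = neighbors V E w - {u}" by (auto simp: nb_del)
      then show ?thesis using wprops(4)[OF w] fin by (simp add: degree_def nb_fin)
    qed
    have PT: "(\<Prod>w\<in>W. om (degree (V - {u, v}) E w)) = ss^q * xx^r"
    proof -
      have a: "(\<Prod>w\<in>W1. om (degree (V - {u, v}) E w)) = 1"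
        by (rule prod.neutral) (simp add: W1_def dd om_def)
      have b: "(\<Prod>w\<in>W2. om (degree (V - {u, v}) E w)) = ss^q"
      proof -
        have "(\<Prod>w\<in>W2. om (degree (V - {u, v}) E w)) = (\<Prod>w\<in>W2. ss)"
          by (rule prod.cong) (auto simp: W2_def dd om_def)
        then show ?thesis by (simp add: q_def)
      qed
      have c: "(\<Prod>w\<in>W3. om (degree (V - {u, v}) E w)) = xx^r"
      proof -
        have "(\<Prod>w\<in>W3. om (degree (V - {u, v}) E w)) = (\<Prod>w\<in>W3. xx)"
          by (rule prod.cong) (auto simp: W3_def dd om_def)
        then show ?thesis by (simp add: r_def)
      qed
      show ?thesis using prod3[OF finW g1, of "\<lambda>w. om (degree (V - {u, v}) E w)"] a b c
        by (simp add: W1_def W2_def W3_def)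
    qed
    have PS2: "(\<Prod>s\<in>{u, v}. om (degree V E s)) = xx * ss" using uv du dv by (simp add: om_def)
    have "Bnd (V - {u, v}) * (xx * ss) * (ss^p * xx^(q+r)) \<le> Bnd V * (ss^q * xx^r)"
      using Bnd_sub[OF fin sub TS] unfolding PS2 PW PT .
    then have "Bnd (V - {u, v}) * P \<le> Bnd V * (ss^q * xx^r)"
      by (simp add: P_def power_add algebra_simps)
    then show ?thesis by (rule div_bound) (rule Ppos)
  qed
  define cls where "cls w = (if degree V E w = 1 then 1 else if degree V E w = 2 then 1 / ss else 1 / ss^2)" for w
  have B3: "Bnd (V - (insert w (neighbors V E w) \<union> ?S1)) \<le> Bnd V * (cls w / P)" if w: "w \<in> W" for w
  proof -
    let ?Z = "neighbors V E w - {u}"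
    have wN: "w \<in> neighbors V E u" using w by (simp add: W_def)
    have Sw: "insert w (neighbors V E w) \<union> ?S1 = ?S1 \<union> ?Z" using wN wprops(4)[OF w] by auto
    have disj: "?S1 \<inter> ?Z = {}"
    proof -
      have "z \<notin> neighbors V E u" if z: "z \<in> neighbors V E w" for z
      proof
        assume "z \<in> neighbors V E u"
        then have "E u z" "E u w" "E w z" using wN z by (auto simp: neighbors_def)
        moreover have "z \<in> V" using z nb_sub by auto
        ultimately show False using tf uV wprops(3)[OF w] unfolding triangle_free_def by blast
      qed
      then show ?thesis by auto
    qed
    have finZ: "finite ?Z" using fin by (simp add: nb_fin)
    have cZ: "card ?Z = degree V E w - 1" using wprops(4)[OF w] fin by (simp add: degree_def nb_fin)
    have ZV: "?Z \<subseteq> V" using nb_sub by auto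
    have PZ: "(\<Prod>z\<in>?Z. om (degree V E z)) \<ge> ss ^ (degree V E w - 1)"
    proof -
      have "(\<Prod>z\<in>?Z. ss) \<le> (\<Prod>z\<in>?Z. om (degree V E z))"
      proof (rule prod_mono)
        fix z assume z: "z \<in> ?Z"
        have "w \<in> neighbors V E z" using nb_sym[of z V w] z wprops(3)[OF w] by auto
        then have "degree V E z \<ge> 1" using fin
          by (auto simp: degree_def nb_fin card_gt_0_iff Suc_le_eq)
        then have "om 1 \<le> om (degree V E z)" by (rule om_mono)
        then show "0 \<le> ss \<and> ss \<le> om (degree V E z)" using ss_pos by (simp add: om_def)
      qed
      then show ?thesis using cZ by simp
    qed
    have PSw: "(\<Prod>s\<in>?S1 \<union> ?Z. om (degree V E s)) \<ge> P * ss ^ (degree V E w - 1)"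
    proof -
      have "(\<Prod>s\<in>?S1 \<union> ?Z. om (degree V E s)) = (\<Prod>s\<in>?S1. om (degree V E s)) * (\<Prod>s\<in>?Z. om (degree V E s))"
        by (rule prod.union_disjoint) (use fin finZ disj in \<open>auto simp: nb_fin\<close>)
      then show ?thesis using PS1 PZ Ppos by (simp add: mult_left_mono)
    qed
    have SwV: "?S1 \<union> ?Z \<subseteq> V" using S1V ZV by auto
    have "Bnd (V - (?S1 \<union> ?Z)) * (P * ss ^ (degree V E w - 1)) \<le> Bnd V * 1"
      using Bnd_del[OF fin SwV PSw] by simp
    then have a: "Bnd (V - (?S1 \<union> ?Z)) \<le> Bnd V * (1 / (P * ss ^ (degree V E w - 1)))"
      by (rule div_bound) (use Ppos ss_pos in simp)
    have "1 / (P * ss ^ (degree V E w - 1)) \<le> cls w / P"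
    proof -
      have "1 / ss ^ (degree V E w - 1) \<le> cls w"
      proof (cases "degree V E w \<ge> 3")
        case True
        have "ss ^ 2 \<le> ss ^ (degree V E w - 1)" using True ss_lo by (intro power_increasing) auto
        then have "1 / ss ^ (degree V E w - 1) \<le> 1 / ss ^ 2" using ss_pos by (intro divide_left_mono) auto
        then show ?thesis using True by (simp add: cls_def)
      next
        case False
        then have "degree V E w = 1 \<or> degree V E w = 2" using g1 w by force
        then show ?thesis by (auto simp: cls_def)
      qed
      then show ?thesis using Ppos by (simp add: field_simps)
    qed
    then have "Bnd V * (1 / (P * ss ^ (degree V E w - 1))) \<le> Bnd V * (cls w / P)"
      using Bnd_pos by (intro mult_left_mono) (auto simp: less_imp_le)
    then show ?thesis using a Sw by simp
  qed
  have sumcls: "(\<Sum>w\<in>W. cls w) = real p + real q / ss + real r / ss^2"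
  proof -
    have a: "(\<Sum>w\<in>W1. cls w) = real p" by (simp add: W1_def p_def cls_def)
    have b: "(\<Sum>w\<in>W2. cls w) = real q / ss" by (simp add: W2_def q_def cls_def)
    have c: "(\<Sum>w\<in>W3. cls w) = real r / ss^2"
    proof -
      have "(\<Sum>w\<in>W3. cls w) = (\<Sum>w\<in>W3. 1 / ss^2)" by (rule sum.cong) (auto simp: W3_def cls_def)
      then show ?thesis by (simp add: r_def)
    qed
    show ?thesis using sum3[OF finW g1, of cls] a b c by (simp add: W1_def W2_def W3_def)
  qed
  have sub1: "V - ?S1 \<subset> V" "V - {u, v} \<subset> V" using uV by auto
  have "real (card (MD V)) \<le> real (card (MD (V - ?S1))) + real (card (MD (V - {u, v})))
     + (\<Sum>w\<in>W. real (card (MD (V - (insert w (neighbors V E w) \<union> ?S1)))))"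
    using rule_leaf[OF fin vV uV Nv] unfolding W_def[symmetric] of_nat_sum[symmetric] of_nat_add[symmetric] of_nat_le_iff .
  also have "\<dots> \<le> Bnd V * (1 / P) + Bnd V * (ss^q * xx^r / P) + (\<Sum>w\<in>W. Bnd V * (cls w / P))"
  proof (intro add_mono sum_mono)
    show "real (card (MD (V - ?S1))) \<le> Bnd V * (1 / P)" using IH[OF sub1(1)] B1 by linarith
    show "real (card (MD (V - {u, v}))) \<le> Bnd V * (ss^q * xx^r / P)" using IH[OF sub1(2)] B2 by linarith
    fix w assume w: "w \<in> W"
    have "V - (insert w (neighbors V E w) \<union> ?S1) \<subset> V" using uV by auto
    then show "real (card (MD (V - (insert w (neighbors V E w) \<union> ?S1)))) \<le> Bnd V * (cls w / P)"
      using IH B3[OF w] by (meson order_trans)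
  qed
  also have "\<dots> = Bnd V * ((1 + (\<Sum>w\<in>W. cls w) + ss^q * xx^r) / P)"
    by (simp add: algebra_simps sum_distrib_left sum_divide_distrib add_divide_distrib)
  also have "\<dots> \<le> Bnd V * 1"
  proof -
    have "1 + (\<Sum>w\<in>W. cls w) + ss^q * xx^r \<le> P"
      using leaf_num[OF pqr1] unfolding sumcls P_def by simp
    then have "(1 + (\<Sum>w\<in>W. cls w) + ss^q * xx^r) / P \<le> 1" using Ppos by simp
    then show ?thesis using Bnd_pos by (intro mult_left_mono) (auto simp: less_imp_le)
  qed
  finally show ?thesis by simp
qed


lemma MD_empty: "MD {} = {{}}"
  by (auto simp: MD_def maximal_dissociation_set_def dissociation_set_def)

lemma main_bound:
  assumes "finite V" "triangle_free V E"
  shows "real (card (MD V)) \<le> Bnd V"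
  using assms
proof (induction "card V" arbitrary: V rule: less_induct)
  case less
  note fin = less.prems(1) and tf = less.prems(2)
  have IH: "real (card (MD W)) \<le> Bnd W" if "W \<subset> V" for W
  proof -
    have "finite W" using that fin finite_subset by blast
    moreover have "card W < card V" using that fin by (rule psubset_card_mono[rotated])
    moreover have "triangle_free W E" using tf_sub[OF tf] that by auto
    ultimately show ?thesis using less.hyps by blast
  qed
  have nbne: "neighbors V E w = {} \<longleftrightarrow> degree V E w = 0" for w
    using fin by (simp add: degree_def nb_fin)
  show ?case
  proof (cases "V = {}")
    case True
    then show ?thesis by (simp add: MD_empty Bnd_def)
  next
    case Vne: False
    show ?thesis
    proof (cases "\<exists>v\<in>V. degree V E v = 0")
      case True
      then obtain v where vV: "v \<in> V" and d0: "degree V E v = 0" by blast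
      have "real (card (MD V)) \<le> real (card (MD (V - {v})))"
        using rule_iso[OF fin vV] d0 nbne by simp
      also have "\<dots> \<le> Bnd (V - {v})" using IH vV by auto
      also have "\<dots> \<le> Bnd V" using Bnd_le[OF fin] vV by simp
      finally show ?thesis .
    next
      case no0: False
      show ?thesis
      proof (cases "\<exists>v\<in>V. degree V E v = 1")
        case True
        then obtain v where vV: "v \<in> V" and d1: "degree V E v = 1" by blast
        then obtain u where Nv: "neighbors V E v = {u}" by (auto simp: degree_def card_Suc_eq)
        note v1 = nb_single[OF Nv]
        have vNu: "v \<in> neighbors V E u" using nb_sym[of u V v] Nv vV by auto
        show ?thesis
        proof (cases "degree V E u = 1")
          case True
          then obtain x where "neighbors V E u = {x}" by (auto simp: degree_def card_Suc_eq)
          then have Nu: "neighbors V E u = {v}" using vNu by auto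
          have "real (card (MD V)) \<le> real (card (MD (V - {u, v})))"
            using rule_K2[OF fin vV v1(1) Nv Nu] by simp
          also have "\<dots> \<le> Bnd (V - {u, v})" by (rule IH) (use vV in auto)
          also have "\<dots> \<le> Bnd V" using Bnd_le[OF fin] vV v1(1) by simp
          finally show ?thesis .
        next
          case False
          have "degree V E u \<noteq> 0" using no0 v1(1) by auto
          then have "degree V E u \<ge> 2" using False by linarith
          then show ?thesis using leaf_bound[OF fin tf IH vV Nv] by blast
        qed
      next
        case no1: False
        have dmin: "\<forall>w\<in>V. degree V E w \<ge> 2"
        proof
          fix w assume "w \<in> V"
          then have "degree V E w \<noteq> 0" "degree V E w \<noteq> 1" using no0 no1 by auto
          then show "degree V E w \<ge> 2" by linarith
        qed
        show ?thesis
        proof (cases "\<exists>v\<in>V. degree V E v \<ge> 4")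
          case True
          then obtain v where "v \<in> V" "degree V E v \<ge> 4" by blast
          then show ?thesis using T3_big[OF fin tf IH _ dmin] by blast
        next
          case no4: False
          have le3: "\<forall>w\<in>V. degree V E w \<le> 3" using no4 by force
          show ?thesis
          proof (cases "\<exists>v\<in>V. degree V E v = 3 \<and> (\<exists>u\<in>neighbors V E v. degree V E u = 2)")
            case True
            then obtain v where v: "v \<in> V" "degree V E v = 3" "\<exists>u\<in>neighbors V E v. degree V E u = 2" by blast
            have "real (card (MD V)) \<le> 0.975 * Bnd V" by (rule T3_three[OF fin tf IH v(1) dmin v(2,3)])
            also have "\<dots> \<le> Bnd V" using Bnd_pos by simp
            finally show ?thesis .
          next
            case no32: False
            have nb3: "\<forall>u\<in>neighbors V E v. degree V E u = 3" if v: "v \<in> V" "degree V E v = 3" for v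
            proof
              fix u assume u: "u \<in> neighbors V E v"
              then have uV: "u \<in> V" using nb_sub by auto
              have "degree V E u \<noteq> 2" using no32 v u by blast
              then show "degree V E u = 3" using dmin le3 uV by force
            qed
            show ?thesis
            proof (cases "\<exists>v\<in>V. degree V E v = 3")
              case True
              then obtain v where vV: "v \<in> V" and dv: "degree V E v = 3" by blast
              have "neighbors V E v \<noteq> {}" using dv nbne by simp
              then obtain u1 where u1: "u1 \<in> neighbors V E v" by blast
              have u1V: "u1 \<in> V" using u1 nb_sub by auto
              have du1: "degree V E u1 = 3" using nb3[OF vV dv] u1 by blast
              have "neighbors V E u1 - {v} \<noteq> {}"
              proof
                assume "neighbors V E u1 - {v} = {}"
                then have "neighbors V E u1 \<subseteq> {v}" by blast
                then have "card (neighbors V E u1) \<le> 1" by (rule card_sub1)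
                then show False using du1 by (simp add: degree_def)
              qed
              then obtain z where z: "z \<in> neighbors V E u1" "z \<noteq> v" by blast
              have zV: "z \<in> V" using z nb_sub by auto
              have dz: "degree V E z = 3" using nb3[OF u1V du1] z by blast
              show ?thesis by (rule cubic[OF fin tf IH vV dmin dv nb3[OF vV dv] u1 z dz])
            next
              case False
              have d2: "\<forall>w\<in>V. degree V E w = 2" using False dmin le3 by force
              obtain v where "v \<in> V" using Vne by blast
              then show ?thesis using cycle[OF fin tf IH _ d2] by blast
            qed
          qed
        qed
      qed
    qed
  qed
qed

end



lemma xx_pow: "xx ^ n = 6 powr (real n / 4)"
proof -
  have "xx ^ n = xx powr (real n)" using xx_pos by (simp add: powr_realpow)
  also have "\<dots> = 6 powr (1/4 * real n)" unfolding xx_def by (simp add: powr_powr)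
  finally show ?thesis by simp
qed

theorem claim4p1:
  fixes V :: "'a set" and E :: "'a \<Rightarrow> 'a \<Rightarrow> bool"
  assumes "simple_graph V E"
    and "triangle_free V E"
    and "has_leaf V E"
  shows "real (phi V E) < 0.93 * 6 powr (real (card V) / 4)"
proof -
  have fin: "finite V" and sym: "\<And>u v. E u v \<Longrightarrow> E v u" and irr: "\<And>v. \<not> E v v"
    using assms(1) by (auto simp: simple_graph_def)
  interpret sg E by unfold_locales (use sym irr in blast)+
  have b: "real (phi V E) \<le> Bnd V" using main_bound[OF fin assms(2)] by (simp add: phi_MD)
  obtain v where vV: "v \<in> V" and dv: "degree V E v = 1" using assms(3) by (auto simp: has_leaf_def)
  have "Bnd V = om (degree V E v) * (\<Prod>w\<in>V - {v}. om (degree V E w))"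
    unfolding Bnd_def using prod.remove[OF fin vV] by simp
  also have "\<dots> \<le> ss * (\<Prod>w\<in>V - {v}. xx)"
  proof -
    have "(\<Prod>w\<in>V - {v}. om (degree V E w)) \<le> (\<Prod>w\<in>V - {v}. xx)"
      by (rule prod_mono) (use om_pos ss_hi xx_lo in \<open>auto simp: om_def less_imp_le\<close>)
    then show ?thesis using dv ss_pos by (simp add: om_def)
  qed
  also have "\<dots> = ss * xx ^ (card V - 1)" using fin vV by simp
  also have "\<dots> < 0.93 * xx * xx ^ (card V - 1)"
  proof -
    have "ss < 0.93 * xx" using ss_hi xx_lo by simp
    then show ?thesis using xx_pos by simp
  qed
  also have "\<dots> = 0.93 * xx ^ card V"
  proof -
    have "card V \<ge> 1" using fin vV by (metis One_nat_def Suc_leI card_gt_0_iff empty_iff)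
    then have "xx ^ card V = xx * xx ^ (card V - 1)" by (metis Suc_diff_le diff_Suc_1 power_Suc)
    then show ?thesis by simp
  qed
  also have "\<dots> = 0.93 * 6 powr (real (card V) / 4)" by (simp add: xx_pow)
  finally show ?thesis using b by linarith
qed


end
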